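(* Let $N_t,N_r\ge1$ and let $X$ be either $X_{\rm MRC}$ or $X_{\rm MMSE}$ (defined below). Let $C(\rho)=N_t\,\mathrm{E}[\ln(1+\frac{\rho}{N_t}X)]$ (rate in nats), and define $\frac{E_b}{N_0}_{\min}=\frac{\ln 2}{\dot C(0)}$ and $S_0=\frac{2[\dot C(0)]^2}{-\ddot C(0)}$, where dots denote right derivatives with respect to $\rho$ at $\rho=0$. Then for both receivers $$\frac{E_b}{N_0}_{\min}=\frac{\ln 2}{N_r},\qquad S_0=\frac{2N_tN_r}{2N_t+N_r-1}.$$
   Context: Let $\mathbf{H}$ be an $N_r\times N_t$ matrix with i.i.d. $\mathcal{CN}(0,1)$ entries, $\mathbf{h}_j$ its columns, fix $k$, and let $\mathbf{K}$ be $\mathbf{H}$ with column $k$ deleted. $X_{\rm MRC}=\|\mathbf{h}_k\|^2\big/\big(1+\frac{\rho}{N_t}\sum_{j\ne k}|\mathbf{h}_k^\dagger\mathbf{h}_j|^2/\|\mathbf{h}_k\|^2\big)$ and $X_{\rm MMSE}=\mathbf{h}_k^\dagger(\frac{\rho}{N_t}\mathbf{K}\mathbf{K}^\dagger+\mathbf{I}_{N_r})^{-1}\mathbf{h}_k$ (both depend on $\rho$). $\frac{E_b}{N_0}_{\min}$ is the minimum energy per bit and $S_0$ the wideband slope (bits/s/Hz per 3 dB) in Verdú's low-SNR framework. *)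

theory Defs
  imports "HOL-Analysis.Analysis"
begin

text \<open>Channel matrix H :: complex^'t^'r is an N_r x N_t matrix (H$i$j = row i, column j),
  N_r = CARD('r), N_t = CARD('t).  Its law: i.i.d. CN(0,1) entries, i.e. the density
  prod_{i,j} exp(-|H_ij|^2)/pi with respect to Lebesgue measure on C^(N_r x N_t) = R^(2 N_r N_t).\<close>

definition chan_measure :: "(complex^'t::finite^'r::finite) measure" where
  "chan_measure = density lborel
     (\<lambda>H. ennreal (\<Prod>i\<in>UNIV. \<Prod>j\<in>UNIV. exp (- (cmod (H$i$j))\<^sup>2) / pi))"


definition herm :: "complex^'n::finite \<Rightarrow> complex^'n \<Rightarrow> complex" where
  "herm h g = (\<Sum>i\<in>UNIV. cnj (h$i) * g$i)"

definition sqnorm :: "complex^'n::finite \<Rightarrow> real" where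
  "sqnorm h = (\<Sum>i\<in>UNIV. (cmod (h$i))\<^sup>2)"

definition X_MRC :: "'t::finite \<Rightarrow> real \<Rightarrow> complex^'t^'r::finite \<Rightarrow> real" where
  "X_MRC k \<rho> H =
     sqnorm (column k H) /
       (1 + \<rho> / real CARD('t) *
          (\<Sum>j\<in>UNIV - {k}. (cmod (herm (column k H) (column j H)))\<^sup>2) / sqnorm (column k H))"

text \<open>K K^dagger where K is H with column k deleted: (K K^dagger)_{ab} = sum_{j<>k} H_aj conj(H_bj).\<close>
definition KKh :: "'t::finite \<Rightarrow> complex^'t^'r::finite \<Rightarrow> complex^'r^'r" where
  "KKh k H = (\<chi> a b. \<Sum>j\<in>UNIV - {k}. H$a$j * cnj (H$b$j))"

definition X_MMSE :: "'t::finite \<Rightarrow> real \<Rightarrow> complex^'t^'r::finite \<Rightarrow> real" where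
  "X_MMSE k \<rho> H =
     Re (herm (column k H)
          (matrix_inv ((\<rho> / real CARD('t)) *\<^sub>R KKh k H + mat 1) *v column k H))"

definition rate :: "(real \<Rightarrow> complex^'t::finite^'r::finite \<Rightarrow> real) \<Rightarrow> real \<Rightarrow> real" where
  "rate X \<rho> = real CARD('t) *
     (\<integral>H. ln (1 + \<rho> / real CARD('t) * X \<rho> H) \<partial>(chan_measure :: (complex^'t^'r) measure))"

definition EbN0_min :: "real \<Rightarrow> real" where
  "EbN0_min d1 = ln 2 / d1"

definition wideband_slope :: "real \<Rightarrow> real \<Rightarrow> real" where
  "wideband_slope d1 d2 = 2 * d1\<^sup>2 / (- d2)"

definition low_snr :: "(real \<Rightarrow> real) \<Rightarrow> real \<Rightarrow> real \<Rightarrow> bool" where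
  "low_snr C e s \<longleftrightarrow> (\<exists>C1 d2 \<epsilon>. \<epsilon> > 0 \<and>
      (\<forall>\<rho>\<in>{0..<\<epsilon>}. (C has_real_derivative C1 \<rho>) (at \<rho> within {0..})) \<and>
      (C1 has_real_derivative d2) (at 0 within {0..}) \<and>
      EbN0_min (C1 0) = e \<and> wideband_slope (C1 0) d2 = s)"

end

theory Submission
  imports Defs "HOL-Probability.Distributions"
begin

lemma deriv_integral_at:
  fixes \<phi> :: "real \<Rightarrow> 'a \<Rightarrow> real" and M :: "'a measure"
  assumes eps: "\<epsilon> > 0" and rz: "rz \<in> {0..<\<epsilon>}"
  and int: "\<And>r. r \<in> {0..<\<epsilon>} \<Longrightarrow> integrable M (\<phi> r)"
  and B: "integrable M B"
  and lip: "\<And>x r. x \<in> space M \<Longrightarrow> r \<in> {0..<\<epsilon>} \<Longrightarrow> \<bar>\<phi> r x - \<phi> rz x\<bar> \<le> B x * \<bar>r - rz\<bar>"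
  and der: "\<And>x. x \<in> space M \<Longrightarrow> ((\<lambda>r. \<phi> r x) has_real_derivative \<phi>' x) (at rz within {0..})"
  shows "((\<lambda>r. \<integral>x. \<phi> r x \<partial>M) has_real_derivative (\<integral>x. \<phi>' x \<partial>M)) (at rz within {0..})"
    and "integrable M \<phi>'"
proof -
  define S where "S = {0..<\<epsilon>}"
  have atS: "at rz within {0..} = at rz within S"
    unfolding S_def using rz by (intro at_within_nhd[where S="{..<\<epsilon>}"]) auto
  define q where "q = (\<lambda>y x. (\<phi> y x - \<phi> rz x) / (y - rz))"
  have derS: "((\<lambda>y. q y x) \<longlongrightarrow> \<phi>' x) (at rz within S)" if "x \<in> space M" for x
    using der[OF that] unfolding atS has_field_derivative_iff q_def .
  have qmeas: "(\<lambda>x. q y x) \<in> borel_measurable M" if "y \<in> S" for y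
    using int[of y] int[of rz] that rz unfolding q_def S_def
    by (intro borel_measurable_divide borel_measurable_diff borel_measurable_const) auto
  have qbound: "norm (q y x) \<le> B x" if "y \<in> S" "y \<noteq> rz" "x \<in> space M" for x y
  proof -
    have "\<bar>\<phi> y x - \<phi> rz x\<bar> \<le> B x * \<bar>y - rz\<bar>" using lip[of x y] that S_def by auto
    then show ?thesis using that unfolding q_def by (simp add: abs_divide divide_le_eq)
  qed
  have conv: "\<And>X. (\<forall>i. X i \<in> S - {rz}) \<Longrightarrow> X \<longlonglongrightarrow> rz \<Longrightarrow>
     (\<phi>' \<in> borel_measurable M) \<Longrightarrow>
     integrable M \<phi>' \<and> (\<lambda>i. \<integral>x. q (X i) x \<partial>M) \<longlonglongrightarrow> (\<integral>x. \<phi>' x \<partial>M)"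
  proof -
    fix X assume X: "\<forall>i. X i \<in> S - {rz}" "X \<longlonglongrightarrow> rz" and m: "\<phi>' \<in> borel_measurable M"
    have lim: "AE x in M. (\<lambda>i. q (X i) x) \<longlonglongrightarrow> \<phi>' x"
    proof (rule AE_I2)
      fix x assume "x \<in> space M"
      from derS[OF this] X show "(\<lambda>i. q (X i) x) \<longlonglongrightarrow> \<phi>' x"
        unfolding tendsto_at_iff_sequentially comp_def by blast
    qed
    have bd: "AE x in M. norm (q (X i) x) \<le> B x" for i
      using X qbound by (intro AE_I2) auto
    show "integrable M \<phi>' \<and> (\<lambda>i. \<integral>x. q (X i) x \<partial>M) \<longlonglongrightarrow> (\<integral>x. \<phi>' x \<partial>M)"
      using integrable_dominated_convergence[OF m _ B lim bd]
        integral_dominated_convergence[OF m _ B lim bd] qmeas X by auto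
  qed
  define X0 where "X0 = (\<lambda>n::nat. rz + (\<epsilon> - rz) / (real n + 2))"
  have X0S: "\<forall>i. X0 i \<in> S - {rz}"
  proof
    fix i
    have p: "(\<epsilon> - rz) / (real i + 2) > 0" using rz by auto
    have "(\<epsilon> - rz) / (real i + 2) < \<epsilon> - rz" using rz by (simp add: divide_less_eq)
    then show "X0 i \<in> S - {rz}" using p rz unfolding X0_def S_def by auto
  qed
  have X0lim: "X0 \<longlonglongrightarrow> rz"
  proof -
    have "(\<lambda>n. (\<epsilon> - rz) / (real n + 2)) \<longlonglongrightarrow> 0"
      by real_asymp
    from tendsto_add[OF tendsto_const[of rz] this] show ?thesis unfolding X0_def by simp
  qed
  have meas: "\<phi>' \<in> borel_measurable M"
  proof (rule borel_measurable_LIMSEQ_real[where u="\<lambda>i. q (X0 i)"])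
    fix x assume "x \<in> space M"
    from derS[OF this] X0S X0lim show "(\<lambda>i. q (X0 i) x) \<longlonglongrightarrow> \<phi>' x"
      unfolding tendsto_at_iff_sequentially comp_def by blast
  next
    fix i show "q (X0 i) \<in> borel_measurable M" using X0S qmeas by auto
  qed
  show "integrable M \<phi>'" using conv[OF X0S X0lim meas] by auto
  have "((\<lambda>y. ((\<integral>x. \<phi> y x \<partial>M) - (\<integral>x. \<phi> rz x \<partial>M)) / (y - rz)) \<longlongrightarrow> (\<integral>x. \<phi>' x \<partial>M)) (at rz within S)"
    unfolding tendsto_at_iff_sequentially comp_def
  proof (intro allI impI)
    fix X assume X: "\<forall>i. X i \<in> S - {rz}" "X \<longlonglongrightarrow> rz"
    have eq: "((\<integral>x. \<phi> (X i) x \<partial>M) - (\<integral>x. \<phi> rz x \<partial>M)) / (X i - rz) = (\<integral>x. q (X i) x \<partial>M)" for i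
      using X(1) int[of "X i"] int[of rz] rz unfolding q_def S_def
      by (simp add: integral_diff)
    show "(\<lambda>i. ((\<integral>x. \<phi> (X i) x \<partial>M) - (\<integral>x. \<phi> rz x \<partial>M)) / (X i - rz)) \<longlonglongrightarrow> (\<integral>x. \<phi>' x \<partial>M)"
      unfolding eq using conv[OF X meas] by auto
  qed
  then show "((\<lambda>r. \<integral>x. \<phi> r x \<partial>M) has_real_derivative (\<integral>x. \<phi>' x \<partial>M)) (at rz within {0..})"
    unfolding atS has_field_derivative_iff .
qed

definition nd :: "real \<Rightarrow> real" where "nd x = exp (- x\<^sup>2) / sqrt pi"

lemma nd_normal: "nd x = normal_density 0 (1 / sqrt 2) x"
  by (simp add: nd_def normal_density_def power_divide)

lemma nd_nonneg: "0 \<le> nd x" by (simp add: nd_def)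

lemma nd_meas[measurable]: "nd \<in> borel_measurable borel"
  unfolding nd_def by measurable

lemma nd_mom_even: "has_bochner_integral lborel (\<lambda>x. nd x * x ^ (2*k)) (fact (2 * k) / (4^k * fact k))"
  using normal_moment_even[where k=k and \<mu>=0 and \<sigma>="1 / sqrt 2"] by (simp add: nd_normal power_divide)

lemma nd_mom_odd: "has_bochner_integral lborel (\<lambda>x. nd x * x ^ (2*k+1)) 0"
  using normal_moment_odd[where k=k and \<mu>=0 and \<sigma>="1 / sqrt 2"] by (simp add: nd_normal)

lemma nd_mom_int: "integrable lborel (\<lambda>x. nd x * x ^ k)"
proof (cases "even k")
  case True then obtain m where "k = 2*m" by auto
  then show ?thesis using nd_mom_even[of m] by (auto simp: has_bochner_integral_iff)
next
  case False then obtain m where "k = 2*m+1" using oddE by blast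
  then show ?thesis using nd_mom_odd[of m] by (auto simp: has_bochner_integral_iff)
qed

definition mom :: "nat \<Rightarrow> real" where "mom k = (\<integral>x. nd x * x ^ k \<partial>lborel)"

lemma mom_vals: "mom 0 = 1" "mom 1 = 0" "mom 2 = 1/2" "mom 3 = 0" "mom 4 = 3/4"
  using nd_mom_even[of 0] nd_mom_odd[of 0] nd_mom_even[of 1] nd_mom_odd[of 1] nd_mom_even[of 2]
  unfolding mom_def by (auto dest!: has_bochner_integral_integral_eq simp: fact_numeral)

lemma prod_Basis_vec:
  "(\<Prod>b\<in>(Basis::('a::euclidean_space^'n) set). g b) = (\<Prod>i\<in>UNIV. \<Prod>u\<in>Basis. g (axis i u))"
proof -
  have B: "(Basis::('a^'n) set) = (\<lambda>(i,u). axis i u) ` (UNIV \<times> Basis)"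
    unfolding Basis_vec_def by auto
  have inj: "inj_on (\<lambda>(i,u). axis i u :: 'a^'n) (UNIV \<times> Basis)"
    by (auto simp: inj_on_def axis_eq_axis nonzero_Basis)
  show ?thesis unfolding B prod.reindex[OF inj] by (subst prod.cartesian_product) (simp add: split_def)
qed

lemma sum_Basis_vec:
  "(\<Sum>b\<in>(Basis::('a::euclidean_space^'n) set). g b) = (\<Sum>i\<in>UNIV. \<Sum>u\<in>Basis. g (axis i u))"
proof -
  have B: "(Basis::('a^'n) set) = (\<lambda>(i,u). axis i u) ` (UNIV \<times> Basis)"
    unfolding Basis_vec_def by auto
  have inj: "inj_on (\<lambda>(i,u). axis i u :: 'a^'n) (UNIV \<times> Basis)"
    by (auto simp: inj_on_def axis_eq_axis nonzero_Basis)
  show ?thesis unfolding B sum.reindex[OF inj] by (subst sum.cartesian_product) (simp add: split_def)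
qed

definition bR :: "'r \<Rightarrow> 't \<Rightarrow> complex^'t^'r" where "bR i j = axis i (axis j 1)"
definition bI :: "'r \<Rightarrow> 't \<Rightarrow> complex^'t^'r" where "bI i j = axis i (axis j \<i>)"

lemma bR_Basis[simp]: "bR i j \<in> (Basis :: (complex^'t::finite^'r::finite) set)"
  unfolding bR_def Basis_vec_def by auto
lemma bI_Basis[simp]: "bI i j \<in> (Basis :: (complex^'t::finite^'r::finite) set)"
  unfolding bI_def Basis_vec_def by auto
lemma bR_eq[simp]: "(bR i j = (bR i' j' :: complex^'t::finite^'r::finite)) \<longleftrightarrow> i = i' \<and> j = j'"
  unfolding bR_def by (auto simp: axis_eq_axis)
lemma bI_eq[simp]: "(bI i j = (bI i' j' :: complex^'t::finite^'r::finite)) \<longleftrightarrow> i = i' \<and> j = j'"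
  unfolding bI_def by (auto simp: axis_eq_axis)
lemma bRI_neq[simp]: "(bR i j = (bI i' j' :: complex^'t::finite^'r::finite)) = False"
   "(bI i j = (bR i' j' :: complex^'t::finite^'r::finite)) = False"
  unfolding bR_def bI_def by (auto simp: axis_eq_axis complex_eq_iff)

lemma inner_bR: "H \<bullet> bR i j = Re (H$i$j)" unfolding bR_def by (simp add: inner_axis)
lemma inner_bI: "H \<bullet> bI i j = Im (H$i$j)" unfolding bI_def by (simp add: inner_axis)

lemma chan_dens_prod:
  "(\<Prod>i\<in>UNIV. \<Prod>j\<in>UNIV. exp (- (cmod (H$i$j))\<^sup>2) / pi) = (\<Prod>b\<in>(Basis::(complex^'t::finite^'r::finite) set). nd (H \<bullet> b))"
proof -
  have "(\<Prod>b\<in>(Basis::(complex^'t^'r) set). nd (H \<bullet> b)) = (\<Prod>i\<in>UNIV. \<Prod>j\<in>UNIV. nd (Re (H$i$j)) * nd (Im (H$i$j)))"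
    unfolding prod_Basis_vec by (simp add: inner_axis Basis_complex_def)
  also have "\<dots> = (\<Prod>i\<in>UNIV. \<Prod>j\<in>UNIV. exp (- (cmod (H$i$j))\<^sup>2) / pi)"
    by (intro prod.cong refl) (simp add: nd_def cmod_power2 exp_diff exp_minus field_simps)
  finally show ?thesis by simp
qed

abbreviation "PB \<equiv> (\<Pi>\<^sub>M b\<in>(Basis::(complex^'t::finite^'r::finite) set). (lborel::real measure))"
abbreviation "phiB \<equiv> (\<lambda>f. \<Sum>b\<in>(Basis::(complex^'t::finite^'r::finite) set). f b *\<^sub>R b)"

lemma phiB_inner: "b \<in> Basis \<Longrightarrow> phiB f \<bullet> (b :: complex^'t::finite^'r::finite) = f b"
  by (simp add: inner_sum_left inner_Basis if_distrib cong: if_cong)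

lemma chan_eq: "(chan_measure :: (complex^'t::finite^'r::finite) measure) =
   density lborel (\<lambda>H. ennreal (\<Prod>b\<in>Basis. nd (H \<bullet> b)))"
  unfolding chan_measure_def chan_dens_prod ..

lemma phiB_meas[measurable]: "phiB \<in> measurable (PB :: (complex^'t::finite^'r::finite \<Rightarrow> real) measure) borel"
  by measurable

lemma chan_integral:
  fixes F :: "complex^'t::finite^'r::finite \<Rightarrow> real"
  assumes [measurable]: "F \<in> borel_measurable borel"
  shows "(\<integral>H. F H \<partial>chan_measure) = (\<integral>f. (\<Prod>b\<in>Basis. nd (f b) * 1) * F (phiB f) \<partial>(PB :: (complex^'t^'r \<Rightarrow> real) measure))"
    and "integrable chan_measure F \<longleftrightarrow> integrable (PB :: (complex^'t^'r \<Rightarrow> real) measure) (\<lambda>f. (\<Prod>b\<in>Basis. nd (f b) * 1) * F (phiB f))"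
proof -
  have m: "(\<lambda>H::complex^'t^'r. \<Prod>b\<in>Basis. nd (H \<bullet> b)) \<in> borel_measurable borel" by measurable
  have c: "(\<Prod>b\<in>Basis. nd (phiB f \<bullet> b)) = (\<Prod>b\<in>Basis. nd (f b) * 1)" for f :: "complex^'t^'r \<Rightarrow> real"
    by (intro prod.cong refl) (simp add: phiB_inner)
  show "(\<integral>H. F H \<partial>chan_measure) = (\<integral>f. (\<Prod>b\<in>Basis. nd (f b) * 1) * F (phiB f) \<partial>(PB :: (complex^'t^'r \<Rightarrow> real) measure))"
    unfolding chan_eq
    apply (subst integral_density)
    apply (simp_all add: m nd_nonneg prod_nonneg)
    apply (subst lborel_eq)
    apply (subst integral_distr)
    apply (simp_all add: c)
    done
  show "integrable chan_measure F \<longleftrightarrow> integrable (PB :: (complex^'t^'r \<Rightarrow> real) measure) (\<lambda>f. (\<Prod>b\<in>Basis. nd (f b) * 1) * F (phiB f))"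
    unfolding chan_eq
    apply (subst integrable_density)
    apply (simp_all add: m nd_nonneg prod_nonneg)
    apply (subst lborel_eq)
    apply (subst integrable_distr_eq)
    apply (simp_all add: c)
    done
qed

lemma chan_prod:
  fixes G :: "(complex^'t::finite^'r::finite) \<Rightarrow> real \<Rightarrow> real"
  assumes int: "\<And>b. b \<in> Basis \<Longrightarrow> integrable lborel (\<lambda>x. nd x * G b x)"
  and meas[measurable]: "\<And>b. G b \<in> borel_measurable borel"
  shows "integrable chan_measure (\<lambda>H. \<Prod>b\<in>Basis. G b (H \<bullet> b))"
    and "(\<integral>H. (\<Prod>b\<in>Basis. G b (H \<bullet> b)) \<partial>chan_measure) = (\<Prod>b\<in>Basis. \<integral>x. nd x * G b x \<partial>lborel)"
proof -
  interpret product_sigma_finite "\<lambda>_::complex^'t^'r. lborel::real measure" by standard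
  have m: "(\<lambda>H. \<Prod>b\<in>Basis. G b (H \<bullet> b)) \<in> borel_measurable (borel :: (complex^'t^'r) measure)"
    by measurable
  have eq: "(\<Prod>b\<in>Basis. nd (f b) * 1) * (\<Prod>b\<in>Basis. G b (phiB f \<bullet> b)) = (\<Prod>b\<in>Basis. nd (f b) * G b (f b))"
    for f :: "complex^'t^'r \<Rightarrow> real"
    by (simp add: prod.distrib[symmetric] phiB_inner cong: prod.cong)
  show "integrable chan_measure (\<lambda>H. \<Prod>b\<in>Basis. G b (H \<bullet> b))"
    unfolding chan_integral(2)[OF m] eq
    by (rule product_integrable_prod) (auto intro: int)
  show "(\<integral>H. (\<Prod>b\<in>Basis. G b (H \<bullet> b)) \<partial>chan_measure) = (\<Prod>b\<in>Basis. \<integral>x. nd x * G b x \<partial>lborel)"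
    unfolding chan_integral(1)[OF m] eq
    by (rule product_integral_prod) (auto intro: int)
qed

lemma prod_pow_ind: "finite A \<Longrightarrow> c \<in> A \<Longrightarrow> (\<Prod>b\<in>A. (y b :: real) ^ (of_bool (b = c))) = y c"
proof -
  assume "finite A" "c \<in> A"
  have "(\<Prod>b\<in>A. (y b :: real) ^ (of_bool (b = c))) = (\<Prod>b\<in>A. if b = c then y b else 1)"
    by (intro prod.cong) auto
  then show ?thesis using \<open>finite A\<close> \<open>c \<in> A\<close> by (simp add: prod.delta)
qed

lemma mom_vals': "mom 0 = 1" "mom (Suc 0) = 0" "mom (Suc (Suc 0)) = 1/2" "mom (Suc (Suc (Suc 0))) = 0" "mom (Suc (Suc (Suc (Suc 0)))) = 3/4"
  using mom_vals by (simp_all add: numeral_eq_Suc)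

definition wick4 :: "'a \<Rightarrow> 'a \<Rightarrow> 'a \<Rightarrow> 'a \<Rightarrow> real" where
  "wick4 b1 b2 b3 b4 = (of_bool (b1=b2) * of_bool (b3=b4) + of_bool (b1=b3) * of_bool (b2=b4) + of_bool (b1=b4) * of_bool (b2=b3)) / 4"

lemma mono4:
  fixes b1 b2 b3 b4 :: "complex^'t::finite^'r::finite"
  assumes B: "b1 \<in> Basis" "b2 \<in> Basis" "b3 \<in> Basis" "b4 \<in> Basis"
  shows "integrable chan_measure (\<lambda>H. (H\<bullet>b1)*(H\<bullet>b2)*(H\<bullet>b3)*(H\<bullet>b4))"
    and "(\<integral>H. (H\<bullet>b1)*(H\<bullet>b2)*(H\<bullet>b3)*(H\<bullet>b4) \<partial>chan_measure) = wick4 b1 b2 b3 b4"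
proof -
  define e where "e b = of_bool (b=b1) + of_bool (b=b2) + of_bool (b=b3) + (of_bool (b=b4)::nat)" for b
  have eq: "(H\<bullet>b1)*(H\<bullet>b2)*(H\<bullet>b3)*(H\<bullet>b4) = (\<Prod>b\<in>Basis. (\<lambda>x. x ^ e b) (H\<bullet>b))" for H :: "complex^'t^'r"
    unfolding e_def power_add prod.distrib using B by (simp add: prod_pow_ind)
  have int: "integrable lborel (\<lambda>x. nd x * x ^ e b)" for b using nd_mom_int .
  note cp = chan_prod[where G="\<lambda>b x. x ^ e b", OF int]
  show "integrable chan_measure (\<lambda>H. (H\<bullet>b1)*(H\<bullet>b2)*(H\<bullet>b3)*(H\<bullet>b4))"
    unfolding eq by (rule cp) measurable
  have "(\<integral>H. (H\<bullet>b1)*(H\<bullet>b2)*(H\<bullet>b3)*(H\<bullet>b4) \<partial>chan_measure) = (\<Prod>b\<in>Basis. mom (e b))"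
    unfolding eq mom_def by (rule cp) measurable
  also have "\<dots> = (\<Prod>b\<in>{b1,b2,b3,b4}. mom (e b))"
    by (rule prod.mono_neutral_right) (auto simp: B e_def mom_vals)
  also have "\<dots> = wick4 b1 b2 b3 b4"
    unfolding wick4_def e_def
    by (cases "b1=b2"; cases "b1=b3"; cases "b1=b4"; cases "b2=b3"; cases "b2=b4"; cases "b3=b4")
       (simp_all add: mom_vals' insert_commute)
  finally show "(\<integral>H. (H\<bullet>b1)*(H\<bullet>b2)*(H\<bullet>b3)*(H\<bullet>b4) \<partial>chan_measure) = wick4 b1 b2 b3 b4" .
qed

lemma mono2:
  fixes b1 b2 :: "complex^'t::finite^'r::finite"
  assumes B: "b1 \<in> Basis" "b2 \<in> Basis"
  shows "integrable chan_measure (\<lambda>H. (H\<bullet>b1)*(H\<bullet>b2))"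
    and "(\<integral>H. (H\<bullet>b1)*(H\<bullet>b2) \<partial>chan_measure) = of_bool (b1 = b2) / 2"
proof -
  define e where "e b = of_bool (b=b1) + (of_bool (b=b2)::nat)" for b
  have eq: "(H\<bullet>b1)*(H\<bullet>b2) = (\<Prod>b\<in>Basis. (\<lambda>x. x ^ e b) (H\<bullet>b))" for H :: "complex^'t^'r"
    unfolding e_def power_add prod.distrib using B by (simp add: prod_pow_ind)
  have int: "integrable lborel (\<lambda>x. nd x * x ^ e b)" for b using nd_mom_int .
  note cp = chan_prod[where G="\<lambda>b x. x ^ e b", OF int]
  show "integrable chan_measure (\<lambda>H. (H\<bullet>b1)*(H\<bullet>b2))"
    unfolding eq by (rule cp) measurable
  have "(\<integral>H. (H\<bullet>b1)*(H\<bullet>b2) \<partial>chan_measure) = (\<Prod>b\<in>Basis. mom (e b))"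
    unfolding eq mom_def by (rule cp) measurable
  also have "\<dots> = (\<Prod>b\<in>{b1,b2}. mom (e b))"
    by (rule prod.mono_neutral_right) (auto simp: B e_def mom_vals)
  also have "\<dots> = of_bool (b1 = b2) / 2"
    unfolding e_def by (cases "b1=b2") (simp_all add: mom_vals')
  finally show "(\<integral>H. (H\<bullet>b1)*(H\<bullet>b2) \<partial>chan_measure) = of_bool (b1 = b2) / 2" .
qed

definition aa :: "'t \<Rightarrow> complex^'t::finite^'r::finite \<Rightarrow> real" where
  "aa k H = sqnorm (column k H)"
definition cc :: "'t \<Rightarrow> complex^'t::finite^'r::finite \<Rightarrow> real" where
  "cc k H = (\<Sum>j\<in>UNIV - {k}. (cmod (herm (column k H) (column j H)))\<^sup>2)"

lemma cmod_sq: "(cmod z)\<^sup>2 = Re z * Re z + Im z * Im z" by (subst cmod_power2) (simp add: power2_eq_square)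

lemma aa_coord: "aa k H = (\<Sum>i\<in>UNIV. (H\<bullet>bR i k)*(H\<bullet>bR i k) + (H\<bullet>bI i k)*(H\<bullet>bI i k))"
  unfolding aa_def sqnorm_def inner_bR inner_bI by (simp add: cmod_sq column_def)

lemma aa2_coord: "(aa k H)\<^sup>2 = (\<Sum>i\<in>UNIV. \<Sum>i'\<in>UNIV.
    (H\<bullet>bR i k)*(H\<bullet>bR i k)*(H\<bullet>bR i' k)*(H\<bullet>bR i' k) + (H\<bullet>bR i k)*(H\<bullet>bR i k)*(H\<bullet>bI i' k)*(H\<bullet>bI i' k)
  + (H\<bullet>bI i k)*(H\<bullet>bI i k)*(H\<bullet>bR i' k)*(H\<bullet>bR i' k) + (H\<bullet>bI i k)*(H\<bullet>bI i k)*(H\<bullet>bI i' k)*(H\<bullet>bI i' k))"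
  unfolding aa_coord power2_eq_square sum_product by (simp add: algebra_simps)

lemma herm_sq_coord:
  "(cmod (herm (column k H) (column j H)))\<^sup>2 = (\<Sum>i\<in>UNIV. \<Sum>i'\<in>UNIV.
     (H\<bullet>bR i k)*(H\<bullet>bR i j)*(H\<bullet>bR i' k)*(H\<bullet>bR i' j) + (H\<bullet>bR i k)*(H\<bullet>bR i j)*(H\<bullet>bI i' k)*(H\<bullet>bI i' j)
   + (H\<bullet>bI i k)*(H\<bullet>bI i j)*(H\<bullet>bR i' k)*(H\<bullet>bR i' j) + (H\<bullet>bI i k)*(H\<bullet>bI i j)*(H\<bullet>bI i' k)*(H\<bullet>bI i' j)
   + (H\<bullet>bR i k)*(H\<bullet>bI i j)*(H\<bullet>bR i' k)*(H\<bullet>bI i' j) - (H\<bullet>bR i k)*(H\<bullet>bI i j)*(H\<bullet>bI i' k)*(H\<bullet>bR i' j)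
   - (H\<bullet>bI i k)*(H\<bullet>bR i j)*(H\<bullet>bR i' k)*(H\<bullet>bI i' j) + (H\<bullet>bI i k)*(H\<bullet>bR i j)*(H\<bullet>bI i' k)*(H\<bullet>bR i' j))" (is "_ = ?rhs")
proof -
  have re: "Re (herm (column k H) (column j H)) = (\<Sum>i\<in>UNIV. (H\<bullet>bR i k)*(H\<bullet>bR i j) + (H\<bullet>bI i k)*(H\<bullet>bI i j))"
    unfolding herm_def inner_bR inner_bI by (simp add: column_def Re_sum)
  have im: "Im (herm (column k H) (column j H)) = (\<Sum>i\<in>UNIV. (H\<bullet>bR i k)*(H\<bullet>bI i j) - (H\<bullet>bI i k)*(H\<bullet>bR i j))"
    unfolding herm_def inner_bR inner_bI by (simp add: column_def Im_sum)
  define A where "A i = (H\<bullet>bR i k)*(H\<bullet>bR i j) + (H\<bullet>bI i k)*(H\<bullet>bI i j)" for i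
  define B where "B i = (H\<bullet>bR i k)*(H\<bullet>bI i j) - (H\<bullet>bI i k)*(H\<bullet>bR i j)" for i
  have "(cmod (herm (column k H) (column j H)))\<^sup>2 = (\<Sum>i\<in>UNIV. A i) * (\<Sum>i\<in>UNIV. A i) + (\<Sum>i\<in>UNIV. B i) * (\<Sum>i\<in>UNIV. B i)"
    unfolding cmod_sq re im A_def B_def ..
  also have "\<dots> = (\<Sum>i\<in>UNIV. \<Sum>i'\<in>UNIV. A i * A i' + B i * B i')"
    by (simp add: sum_product sum.distrib)
  also have "\<dots> = ?rhs"
    by (intro sum.cong refl) (simp add: A_def B_def algebra_simps)
  finally show ?thesis .
qed

lemma fixes k :: "'t::finite" shows int_aa: "integrable (chan_measure :: (complex^'t^'r::finite) measure) (aa k)" and E_aa: "(\<integral>H. aa k H \<partial>(chan_measure :: (complex^'t^'r::finite) measure)) = real CARD('r::finite)"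
  by (simp_all add: aa_coord[abs_def] integral_sum integral_add mono2)

lemma fixes k :: "'t::finite" shows int_aa2: "integrable (chan_measure :: (complex^'t^'r::finite) measure) (\<lambda>H. (aa k H)\<^sup>2)" and E_aa2: "(\<integral>H. (aa k H)\<^sup>2 \<partial>(chan_measure :: (complex^'t^'r::finite) measure)) = real CARD('r::finite) * (real CARD('r) + 1)"
proof -
  show "integrable (chan_measure :: (complex^'t^'r::finite) measure) (\<lambda>H. (aa k H)\<^sup>2)"
    by (simp add: aa2_coord mono4)
  have "(\<integral>H. (aa k H)\<^sup>2 \<partial>(chan_measure :: (complex^'t^'r::finite) measure)) = (\<Sum>i\<in>(UNIV::'r set). \<Sum>i'\<in>UNIV. 1 + of_bool (i = i'))"
    by (simp add: aa2_coord integral_sum integral_add mono4 wick4_def) (intro sum.cong refl, simp add: of_bool_def)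
  also have "\<dots> = real CARD('r::finite) * (real CARD('r) + 1)"
    by (simp add: sum.distrib algebra_simps)
  finally show "(\<integral>H. (aa k H)\<^sup>2 \<partial>(chan_measure :: (complex^'t^'r::finite) measure)) = real CARD('r::finite) * (real CARD('r) + 1)" .
qed

lemma wick_cc: "j \<noteq> k \<Longrightarrow> wick4 (bR i k) (bR i j) (bR i' k) (bR i' j) +
            wick4 (bR i k) (bR i j) (bI i' k) (bI i' j) +
            wick4 (bI i k) (bI i j) (bR i' k) (bR i' j) +
            wick4 (bI i k) (bI i j) (bI i' k) (bI i' j) +
            wick4 (bR i k) (bI i j) (bR i' k) (bI i' j) -
            wick4 (bR i k) (bI i j) (bI i' k) (bR i' j) -
            wick4 (bI i k) (bR i j) (bR i' k) (bI i' j) +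
            wick4 (bI i k) (bR i j) (bI i' k) (bR i' j) = of_bool (i = i')"
  for i i' :: "'r::finite" and j k :: "'t::finite"
  by (simp add: wick4_def of_bool_def)

lemma fixes k :: "'t::finite" shows int_cc: "integrable (chan_measure :: (complex^'t^'r::finite) measure) (cc k)" and E_cc: "(\<integral>H. cc k H \<partial>(chan_measure :: (complex^'t^'r::finite) measure)) = (real CARD('t) - 1) * real CARD('r)"
proof -
  show "integrable (chan_measure :: (complex^'t^'r::finite) measure) (cc k)"
    unfolding cc_def[abs_def] herm_sq_coord by (simp add: mono4)
  have "(\<integral>H. cc k H \<partial>(chan_measure :: (complex^'t^'r::finite) measure)) = (\<Sum>j\<in>UNIV-{k}. \<Sum>i\<in>(UNIV::'r set). \<Sum>i'\<in>UNIV. of_bool (i = i'))"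
    unfolding cc_def[abs_def] herm_sq_coord
    by (simp add: integral_sum integral_add integral_diff mono4 wick_cc)
  also have "\<dots> = (real CARD('t) - 1) * real CARD('r)"
    by (simp add: card_Diff_singleton of_bool_def)
  finally show "(\<integral>H. cc k H \<partial>(chan_measure :: (complex^'t^'r::finite) measure)) = (real CARD('t) - 1) * real CARD('r)" .
qed

lemma prod_ge_1_sum: "finite A \<Longrightarrow> (\<And>b. b \<in> A \<Longrightarrow> 0 \<le> y b) \<Longrightarrow> 1 + (\<Sum>b\<in>A. y b) \<le> (\<Prod>b\<in>A. 1 + (y b :: real))"
proof (induction A rule: finite_induct)
  case empty then show ?case by simp
next
  case (insert x F)
  have h: "1 + sum y F \<le> prod (\<lambda>b. 1 + y b) F" using insert by auto
  have p: "0 \<le> sum y F" using insert by (auto intro: sum_nonneg)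
  have y: "0 \<le> y x" using insert by auto
  have "1 + sum y (insert x F) = 1 + y x + sum y F" using insert by simp
  also have "\<dots> \<le> (1 + y x) * (1 + sum y F)" using y p by (simp add: algebra_simps)
  also have "\<dots> \<le> (1 + y x) * prod (\<lambda>b. 1 + y b) F" using h y by (intro mult_left_mono) auto
  finally show ?case using insert by simp
qed

lemma norm_sq_Basis: "(norm (H::'a::euclidean_space))\<^sup>2 = (\<Sum>b\<in>Basis. (H \<bullet> b)\<^sup>2)"
  by (subst power2_norm_eq_inner, subst euclidean_inner) (simp add: power2_eq_square)

lemma int_bound3: "integrable (chan_measure :: (complex^'t::finite^'r::finite) measure) (\<lambda>H. (1 + (norm H)\<^sup>2)^3)"
proof -
  have i1: "integrable lborel (\<lambda>x. nd x * (1 + x\<^sup>2)^3)"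
  proof -
    have "(\<lambda>x. nd x * (1 + x\<^sup>2)^3) = (\<lambda>x. nd x * x^0 + 3 * (nd x * x^2) + 3 * (nd x * x^4) + nd x * x^6)"
      by (auto simp: fun_eq_iff algebra_simps power2_eq_square eval_nat_numeral)
    then show ?thesis
      using nd_mom_int[of 0] nd_mom_int[of 2] nd_mom_int[of 4] nd_mom_int[of 6]
      by (simp only:) (intro Bochner_Integration.integrable_add integrable_mult_right; assumption)
  qed
  have ip: "integrable (chan_measure :: (complex^'t^'r) measure) (\<lambda>H. \<Prod>b\<in>Basis. (\<lambda>x. (1 + x\<^sup>2)^3) (H\<bullet>b))"
    by (rule chan_prod(1)) (use i1 in auto)
  show ?thesis
  proof (rule Bochner_Integration.integrable_bound[OF ip])
    show "(\<lambda>H. (1 + (norm H)\<^sup>2)^3) \<in> borel_measurable (chan_measure :: (complex^'t^'r) measure)"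
      unfolding chan_measure_def by measurable
    show "AE H in (chan_measure :: (complex^'t^'r) measure). norm ((1 + (norm H)\<^sup>2)^3) \<le> norm (\<Prod>b\<in>Basis. (\<lambda>x. (1 + x\<^sup>2)^3) (H\<bullet>b))"
    proof (rule AE_I2)
      fix H :: "complex^'t^'r"
      have "1 + (norm H)\<^sup>2 \<le> (\<Prod>b\<in>Basis. 1 + (H\<bullet>b)\<^sup>2)"
        unfolding norm_sq_Basis by (rule prod_ge_1_sum) auto
      then have "(1 + (norm H)\<^sup>2)^3 \<le> (\<Prod>b\<in>Basis. 1 + (H\<bullet>b)\<^sup>2)^3"
        by (intro power_mono) auto
      then show "norm ((1 + (norm H)\<^sup>2)^3) \<le> norm (\<Prod>b\<in>Basis. (\<lambda>x. (1 + x\<^sup>2)^3) (H\<bullet>b))"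
        by (simp add: prod_power_distrib abs_prod)
    qed
  qed
qed

lemma sum_sqnorm_cols: "(\<Sum>j\<in>UNIV. sqnorm (column j H)) = (norm (H :: complex^'t::finite^'r::finite))\<^sup>2"
proof -
  have "(norm H)\<^sup>2 = (\<Sum>i\<in>UNIV. \<Sum>j\<in>UNIV. (cmod (H$i$j))\<^sup>2)"
    by (simp add: norm_vec_def L2_set_def sum_nonneg)
  also have "\<dots> = (\<Sum>j\<in>UNIV. sqnorm (column j H))"
    unfolding sqnorm_def column_def by (simp, rule sum.swap)
  finally show ?thesis by simp
qed

lemma sqnorm_norm: "sqnorm x = (norm x)\<^sup>2"
  by (simp add: sqnorm_def norm_vec_def L2_set_def sum_nonneg)

lemma herm_add_right: "herm x (y + z) = herm x y + herm x z"
  by (simp add: herm_def algebra_simps sum.distrib)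
lemma herm_add_left: "herm (x + y) z = herm x z + herm y z"
  by (simp add: herm_def algebra_simps sum.distrib)
lemma herm_diff_right: "herm x (y - z) = herm x y - herm x z"
  by (simp add: herm_def algebra_simps sum_subtractf)
lemma herm_diff_left: "herm (x - y) z = herm x z - herm y z"
  by (simp add: herm_def algebra_simps sum_subtractf)
lemma herm_scale_right: "herm x (c *s y) = c * herm x y"
  by (simp add: herm_def sum_distrib_left algebra_simps)
lemma herm_scale_left: "herm (c *s x) y = cnj c * herm x y"
  by (simp add: herm_def sum_distrib_left algebra_simps)
lemma herm_sum_right: "herm x (\<Sum>j\<in>A. f j) = (\<Sum>j\<in>A. herm x (f j))"
  by (simp add: herm_def sum_component sum_distrib_left) (rule sum.swap)
lemma herm_sum_left: "herm (\<Sum>j\<in>A. f j) x = (\<Sum>j\<in>A. herm (f j) x)"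
  by (simp add: herm_def sum_component sum_distrib_right) (rule sum.swap)
lemma cnj_mult_self: "cnj z * z = complex_of_real ((cmod z)\<^sup>2)"
  by (subst mult.commute) (simp add: complex_mult_cnj cmod_power2)
lemma herm_cnj: "herm y x = cnj (herm x y)"
  by (simp add: herm_def mult.commute)
lemma herm_zero_left[simp]: "herm 0 x = 0" by (simp add: herm_def)
lemma herm_zero_right[simp]: "herm x 0 = 0" by (simp add: herm_def)
lemma herm_self: "herm x x = of_real ((norm x)\<^sup>2)"
proof -
  have "herm x x = of_real (sqnorm x)"
    by (simp add: herm_def sqnorm_def cnj_mult_self)
  then show ?thesis by (simp add: sqnorm_norm)
qed
lemma Re_herm_self: "Re (herm x x) = (norm x)\<^sup>2" by (simp add: herm_self)

lemma herm_CS: "cmod (herm x y) \<le> norm x * norm y"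
proof -
  have "cmod (herm x y) \<le> (\<Sum>i\<in>UNIV. cmod (x$i) * cmod (y$i))"
    unfolding herm_def by (rule order_trans[OF norm_sum]) (simp add: norm_mult)
  also have "\<dots> \<le> L2_set (\<lambda>i. cmod (x$i)) UNIV * L2_set (\<lambda>i. cmod (y$i)) UNIV"
    using L2_set_mult_ineq[of "\<lambda>i. cmod (x$i)" "\<lambda>i. cmod (y$i)" UNIV] by simp
  finally show ?thesis by (simp add: norm_vec_def)
qed

lemma herm_CS2: "(cmod (herm x y))\<^sup>2 \<le> (norm x)\<^sup>2 * (norm y)\<^sup>2"
  using herm_CS[of x y] by (metis norm_ge_zero power_mono power_mult_distrib)

lemma norm_scale_vec: "norm (c *s (x :: complex^'n::finite)) = cmod c * norm x"
  unfolding norm_vec_def by (simp add: L2_set_right_distrib norm_mult)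

definition Kop :: "'t \<Rightarrow> complex^'t::finite^'r::finite \<Rightarrow> complex^'r \<Rightarrow> complex^'r" where
  "Kop k H x = (\<Sum>j\<in>UNIV - {k}. herm (column j H) x *s column j H)"
definition Tsum :: "'t \<Rightarrow> complex^'t::finite^'r::finite \<Rightarrow> real" where
  "Tsum k H = (\<Sum>j\<in>UNIV - {k}. (norm (column j H))\<^sup>2)"

lemma KKh_mult: "KKh k H *v x = Kop k H x"
  by (simp add: vec_eq_iff KKh_def Kop_def matrix_vector_mult_def herm_def sum_component
      sum_distrib_left sum_distrib_right column_def algebra_simps sum.swap[of _ "UNIV - {k}"])

lemma scaleR_mat_vec: "((s::real) *\<^sub>R (A::complex^'n::finite^'m::finite)) *v x = complex_of_real s *s (A *v x)"
proof -
  have "(((s::real) *\<^sub>R A) *v x) $ i = (complex_of_real s *s (A *v x)) $ i" for i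
  proof -
    have "(((s::real) *\<^sub>R A) *v x) $ i = (\<Sum>j\<in>UNIV. (s *\<^sub>R (A$i$j)) * x$j)"
      by (simp add: matrix_vector_mult_def)
    also have "\<dots> = (\<Sum>j\<in>UNIV. complex_of_real s * (A$i$j * x$j))"
      by (simp add: scaleR_conv_of_real mult.assoc)
    also have "\<dots> = (complex_of_real s *s (A *v x)) $ i"
      by (simp add: matrix_vector_mult_def sum_distrib_left)
    finally show ?thesis .
  qed
  then show ?thesis by (simp add: vec_eq_iff)
qed

lemma M_mult: "((s *\<^sub>R KKh k H + mat 1) *v x) = x + complex_of_real s *s Kop k H x"
  by (simp add: matrix_vector_mult_add_rdistrib scaleR_mat_vec KKh_mult add.commute)

lemma herm_Kop: "herm x (Kop k H x) = complex_of_real (\<Sum>j\<in>UNIV - {k}. (cmod (herm (column j H) x))\<^sup>2)"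
proof -
  have "herm x (Kop k H x) = (\<Sum>j\<in>UNIV - {k}. herm (column j H) x * herm x (column j H))"
    unfolding Kop_def herm_sum_right herm_scale_right ..
  also have "\<dots> = (\<Sum>j\<in>UNIV - {k}. complex_of_real ((cmod (herm (column j H) x))\<^sup>2))"
    by (intro sum.cong refl) (metis herm_cnj cnj_mult_self mult.commute)
  finally show ?thesis by simp
qed

lemma Re_herm_Kop_nonneg: "0 \<le> Re (herm x (Kop k H x))"
  by (simp add: herm_Kop sum_nonneg)

lemma herm_Kop_sym: "herm (Kop k H x) y = herm x (Kop k H y)"
proof -
  have "herm (Kop k H x) y = (\<Sum>j\<in>UNIV - {k}. cnj (herm (column j H) x) * herm (column j H) y)"
    unfolding Kop_def herm_sum_left herm_scale_left ..
  also have "\<dots> = (\<Sum>j\<in>UNIV - {k}. herm (column j H) y * herm x (column j H))"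
    by (intro sum.cong refl) (metis herm_cnj mult.commute)
  also have "\<dots> = herm x (Kop k H y)"
    unfolding Kop_def herm_sum_right herm_scale_right ..
  finally show ?thesis .
qed

lemma norm_Kop: "norm (Kop k H x) \<le> Tsum k H * norm x"
proof -
  have "norm (Kop k H x) \<le> (\<Sum>j\<in>UNIV - {k}. norm (herm (column j H) x *s column j H))"
    unfolding Kop_def by (rule norm_sum)
  also have "\<dots> \<le> (\<Sum>j\<in>UNIV - {k}. (norm (column j H))\<^sup>2 * norm x)"
  proof (intro sum_mono)
    fix j
    have "norm (herm (column j H) x *s column j H) = cmod (herm (column j H) x) * norm (column j H)"
      by (simp add: norm_scale_vec)
    also have "\<dots> \<le> (norm (column j H) * norm x) * norm (column j H)"
      by (intro mult_right_mono herm_CS) auto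
    finally show "norm (herm (column j H) x *s column j H) \<le> (norm (column j H))\<^sup>2 * norm x"
      by (simp add: power2_eq_square algebra_simps)
  qed
  also have "\<dots> = Tsum k H * norm x" by (simp add: Tsum_def sum_distrib_right)
  finally show ?thesis .
qed

lemma Kop_diff: "Kop k H (x - y) = Kop k H x - Kop k H y"
  by (simp add: Kop_def herm_diff_right vec_eq_iff sum_component algebra_simps sum_subtractf)
lemma Kop_add: "Kop k H (x + y) = Kop k H x + Kop k H y"
  by (simp add: Kop_def herm_add_right vec_eq_iff sum_component algebra_simps sum.distrib)
lemma Kop_scale: "Kop k H (c *s x) = c *s Kop k H x"
  by (simp add: Kop_def herm_scale_right vec_eq_iff sum_component algebra_simps sum_distrib_left)

lemma Tsum_nonneg: "0 \<le> Tsum k H" by (simp add: Tsum_def sum_nonneg)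

definition Mop :: "real \<Rightarrow> 't \<Rightarrow> complex^'t::finite^'r::finite \<Rightarrow> complex^'r \<Rightarrow> complex^'r" where
  "Mop s k H x = x + complex_of_real s *s Kop k H x"

lemma Re_herm_Mop: "0 \<le> s \<Longrightarrow> (norm x)\<^sup>2 \<le> Re (herm x (Mop s k H x))"
  unfolding Mop_def herm_add_right herm_scale_right
  using Re_herm_Kop_nonneg[of x k H] by (simp add: Re_herm_self)

lemma Mop_inj: "0 \<le> s \<Longrightarrow> Mop s k H x = 0 \<Longrightarrow> x = 0"
  using Re_herm_Mop[of s x k H] by simp

definition Rop :: "real \<Rightarrow> 't \<Rightarrow> complex^'t::finite^'r::finite \<Rightarrow> complex^'r \<Rightarrow> complex^'r" where
  "Rop s k H x = matrix_inv (s *\<^sub>R KKh k H + mat 1) *v x"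

lemma Rop_inv:
  assumes s: "0 \<le> s"
  shows "Mop s k H (Rop s k H x) = x" and "Rop s k H (Mop s k H x) = x"
proof -
  let ?A = "s *\<^sub>R KKh k H + mat 1"
  have "\<forall>x. ?A *v x = 0 \<longrightarrow> x = 0" using Mop_inj[OF s, of k H] unfolding M_mult Mop_def by blast
  then obtain B where B: "B ** ?A = mat 1" using matrix_left_invertible_ker by blast
  then have "?A ** B = mat 1" using matrix_left_right_inverse by blast
  with B have "\<exists>A'. ?A ** A' = mat 1 \<and> A' ** ?A = mat 1" by blast
  then have I: "?A ** matrix_inv ?A = mat 1 \<and> matrix_inv ?A ** ?A = mat 1"
    unfolding matrix_inv_def by (rule someI_ex)
  show "Mop s k H (Rop s k H x) = x"
    using I unfolding Rop_def M_mult[symmetric] Mop_def by (simp add: matrix_vector_mul_assoc)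
  show "Rop s k H (Mop s k H x) = x"
    using I unfolding Rop_def M_mult[symmetric] Mop_def by (simp add: matrix_vector_mul_assoc)
qed

lemma mat_vec_scale: "(A::complex^'n::finite^'m::finite) *v (c *s x) = c *s (A *v x)"
  by (simp add: vec_eq_iff matrix_vector_mult_def sum_distrib_left algebra_simps)

lemma Rop_add: "Rop s k H (x + y) = Rop s k H x + Rop s k H y"
  unfolding Rop_def by (simp add: matrix_vector_right_distrib)
lemma Rop_diff: "Rop s k H (x - y) = Rop s k H x - Rop s k H y"
  unfolding Rop_def by (simp add: matrix_vector_mult_diff_distrib)
lemma Rop_scale: "Rop s k H (c *s x) = c *s Rop s k H x"
  unfolding Rop_def by (simp add: mat_vec_scale)

lemma norm_Rop: assumes s: "0 \<le> s" shows "norm (Rop s k H x) \<le> norm x"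
proof -
  let ?v = "Rop s k H x"
  have "(norm ?v)\<^sup>2 \<le> Re (herm ?v (Mop s k H ?v))" by (rule Re_herm_Mop[OF s])
  also have "\<dots> = Re (herm ?v x)" by (simp only: Rop_inv(1)[OF s])
  also have "\<dots> \<le> norm ?v * norm x" using herm_CS[of ?v x] complex_Re_le_cmod[of "herm ?v x"] by linarith
  finally have "norm ?v * norm ?v \<le> norm ?v * norm x" by (simp add: power2_eq_square)
  then show ?thesis
    by (cases "norm ?v = 0") (auto simp: mult_le_cancel_left)
qed

lemma herm_Mop_sym: "herm (Mop s k H x) y = herm x (Mop s k H y)"
  unfolding Mop_def herm_add_right herm_add_left herm_scale_right herm_scale_left herm_Kop_sym
  by simp

lemma herm_Rop_sym: assumes s: "0 \<le> s" shows "herm (Rop s k H x) y = herm x (Rop s k H y)"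
proof -
  let ?v = "Rop s k H x" and ?w = "Rop s k H y"
  have "herm ?v y = herm ?v (Mop s k H ?w)" using Rop_inv(1)[OF s, of k H y] by simp
  also have "\<dots> = herm (Mop s k H ?v) ?w" by (simp add: herm_Mop_sym)
  also have "\<dots> = herm x ?w" using Rop_inv(1)[OF s, of k H x] by simp
  finally show ?thesis .
qed

lemma Rop_zero: "Rop 0 k H x = x"
  using Rop_inv(2)[of 0 k H x] by (simp add: Mop_def)

lemma resolvent:
  assumes s: "0 \<le> s" and t: "0 \<le> t"
  shows "Rop s k H x - Rop t k H x = complex_of_real (t - s) *s Rop s k H (Kop k H (Rop t k H x))"
proof -
  let ?u = "Rop t k H x"
  have "Mop s k H (Rop s k H x - ?u) = x - Mop s k H ?u"
    using Rop_inv(1)[OF s, of k H x] by (simp add: Mop_def Kop_diff vec_eq_iff algebra_simps)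
  also have "\<dots> = Mop t k H ?u - Mop s k H ?u" using Rop_inv(1)[OF t, of k H x] by simp
  also have "\<dots> = complex_of_real (t - s) *s Kop k H ?u"
    by (simp add: Mop_def vec_eq_iff algebra_simps)
  finally have "Rop s k H (Mop s k H (Rop s k H x - ?u)) = Rop s k H (complex_of_real (t - s) *s Kop k H ?u)"
    by simp
  then show ?thesis unfolding Rop_inv(2)[OF s] Rop_scale .
qed

lemma lip_from_deriv:
  fixes f f' :: "real \<Rightarrow> real"
  assumes der: "\<And>r. r \<in> {0..<1} \<Longrightarrow> (f has_real_derivative f' r) (at r within {0..})"
  and bd: "\<And>r. r \<in> {0..<1} \<Longrightarrow> \<bar>f' r\<bar> \<le> B"
  and x: "x \<in> {0..<1}" and y: "y \<in> {0..<1}"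
  shows "\<bar>f x - f y\<bar> \<le> B * \<bar>x - y\<bar>"
proof -
  have "norm (f x - f y) \<le> B * norm (x - y)"
  proof (rule field_differentiable_bound[where S="{0..<1}" and f'=f'])
    show "convex {0..<(1::real)}" by simp
    fix z :: real assume z: "z \<in> {0..<1}"
    show "(f has_field_derivative f' z) (at z within {0..<1})"
      using der[OF z] by (rule has_field_derivative_subset) auto
    show "norm (f' z) \<le> B" using bd[OF z] by simp
  qed (use x y in auto)
  then show ?thesis by simp
qed

lemma receiver_main:
  fixes k :: "'t::finite"
    and g gd :: "real \<Rightarrow> complex^'t^'r::finite \<Rightarrow> real" and Ba Bb :: "complex^'t^'r \<Rightarrow> real"
  defines "N \<equiv> real CARD('t)" and "Nr \<equiv> real CARD('r)"
  assumes int: "\<And>\<rho>. \<rho> \<in> {0..<1} \<Longrightarrow> integrable (chan_measure :: (complex^'t^'r) measure) (g \<rho>)"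
  and der1: "\<And>H \<rho>. \<rho> \<in> {0..<1} \<Longrightarrow> ((\<lambda>r. g r H) has_real_derivative gd \<rho> H) (at \<rho> within {0..})"
  and bd1: "\<And>H \<rho>. \<rho> \<in> {0..<1} \<Longrightarrow> \<bar>gd \<rho> H\<bar> \<le> Ba H"
  and iB1: "integrable (chan_measure :: (complex^'t^'r) measure) Ba"
  and g10: "\<And>H. gd 0 H = aa k H / N"
  and der2: "\<And>H. ((\<lambda>r. gd r H) has_real_derivative - (2 * cc k H + (aa k H)\<^sup>2) / N\<^sup>2) (at 0 within {0..})"
  and lip2: "\<And>H \<rho>. \<rho> \<in> {0..<1} \<Longrightarrow> \<bar>gd \<rho> H - gd 0 H\<bar> \<le> Bb H * \<rho>"
  and iB2: "integrable (chan_measure :: (complex^'t^'r) measure) Bb"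
  shows "low_snr (\<lambda>\<rho>. N * (\<integral>H. g \<rho> H \<partial>(chan_measure :: (complex^'t^'r) measure)))
            (ln 2 / Nr) (2 * N * Nr / (2 * N + Nr - 1))"
proof -
  let ?M = "chan_measure :: (complex^'t^'r) measure"
  have Npos: "N > 0" "Nr > 0" unfolding N_def Nr_def by auto
  have N1: "N \<ge> 1" "Nr \<ge> 1" unfolding N_def Nr_def by (auto simp: Suc_le_eq)
  have D1: "((\<lambda>r. \<integral>H. g r H \<partial>?M) has_real_derivative (\<integral>H. gd \<rho> H \<partial>?M)) (at \<rho> within {0..})"
     and I1: "integrable ?M (gd \<rho>)" if r: "\<rho> \<in> {0..<1}" for \<rho>
  proof -
    have lip: "\<bar>g r H - g \<rho> H\<bar> \<le> Ba H * \<bar>r - \<rho>\<bar>" if "r \<in> {0..<1}" for r H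
      by (rule lip_from_deriv[OF der1 bd1 that r])
    show "((\<lambda>r. \<integral>H. g r H \<partial>?M) has_real_derivative (\<integral>H. gd \<rho> H \<partial>?M)) (at \<rho> within {0..})"
      by (rule deriv_integral_at(1)[where \<epsilon>=1, OF _ r int iB1 lip der1[OF r]]) auto
    show "integrable ?M (gd \<rho>)"
      by (rule deriv_integral_at(2)[where \<epsilon>=1, OF _ r int iB1 lip der1[OF r]]) auto
  qed
  define d2 where "d2 H = - (2 * cc k H + (aa k H)\<^sup>2) / N\<^sup>2" for H :: "complex^'t^'r"
  have D2: "((\<lambda>r. \<integral>H. gd r H \<partial>?M) has_real_derivative (\<integral>H. d2 H \<partial>?M)) (at 0 within {0..})"
    using deriv_integral_at(1)[where \<epsilon>=1 and rz=0 and \<phi>=gd and B=Bb and \<phi>'=d2 and M="?M", OF _ _ I1 iB2]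
      lip2 der2 unfolding d2_def by auto
  have Ed2: "(\<integral>H. d2 H \<partial>?M) = - (2 * ((N - 1) * Nr) + Nr * (Nr + 1)) / N\<^sup>2"
    unfolding d2_def
    using E_cc[where k=k and 'r='r] E_aa2[where k=k and 'r='r] int_cc[where k=k and 'r='r] int_aa2[where k=k and 'r='r] unfolding N_def Nr_def
    by (simp add: integral_diff integral_divide_zero)
  have E1: "(\<integral>H. gd 0 H \<partial>?M) = Nr / N"
    unfolding g10 using E_aa[where k=k and 'r='r] unfolding N_def Nr_def by simp
  show ?thesis
    unfolding low_snr_def
  proof (intro exI conjI ballI)
    show "(0::real) < 1" by simp
    fix \<rho> :: real assume "\<rho> \<in> {0..<1}"
    show "((\<lambda>\<rho>. N * (\<integral>H. g \<rho> H \<partial>?M)) has_real_derivative (\<lambda>\<rho>. N * (\<integral>H. gd \<rho> H \<partial>?M)) \<rho>) (at \<rho> within {0..})"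
      using D1[OF \<open>\<rho> \<in> {0..<1}\<close>] by (auto intro: DERIV_cmult)
  next
    show "((\<lambda>\<rho>. N * (\<integral>H. gd \<rho> H \<partial>?M)) has_real_derivative N * (\<integral>H. d2 H \<partial>?M)) (at 0 within {0..})"
      using D2 by (auto intro: DERIV_cmult)
    show "EbN0_min ((\<lambda>\<rho>. N * (\<integral>H. gd \<rho> H \<partial>?M)) 0) = ln 2 / Nr"
      using Npos by (simp add: E1 EbN0_min_def)
    have "2 * N + Nr - 1 > 0" using N1 by simp
    note pos = this
    have a: "N * (- (2 * ((N - 1) * Nr) + Nr * (Nr + 1)) / N\<^sup>2) = - (Nr * (2 * N + Nr - 1) / N)"
      using Npos by (simp add: field_simps power2_eq_square)
    have b: "N * (Nr / N) = Nr" using Npos by simp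
    have c: "2 * Nr\<^sup>2 / - (- (Nr * (2 * N + Nr - 1) / N)) = 2 * N * Nr / (2 * N + Nr - 1)"
    proof -
      have nz: "2 * N + Nr - 1 \<noteq> 0" "Nr \<noteq> 0" "N \<noteq> 0" using Npos pos by auto
      have "2 * Nr\<^sup>2 / - (- (Nr * (2 * N + Nr - 1) / N)) = 2 * Nr\<^sup>2 * N / (Nr * (2 * N + Nr - 1))"
        using nz by simp
      also have "\<dots> = (2 * N * Nr) * Nr / ((2 * N + Nr - 1) * Nr)"
        by (simp add: power2_eq_square algebra_simps)
      also have "\<dots> = 2 * N * Nr / (2 * N + Nr - 1)"
        using nz by (rule_tac mult_divide_mult_cancel_right) auto
      finally show ?thesis .
    qed
    show "wideband_slope ((\<lambda>\<rho>. N * (\<integral>H. gd \<rho> H \<partial>?M)) 0) (N * (\<integral>H. d2 H \<partial>?M)) = 2 * N * Nr / (2 * N + Nr - 1)"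
      unfolding wideband_slope_def E1 Ed2 a b c ..
  qed
qed

lemma aa_norm: "aa k H = (norm (column k H))\<^sup>2"
  by (simp add: aa_def sqnorm_norm)

lemma aa_nonneg: "0 \<le> aa k H" by (simp add: aa_norm)
lemma cc_nonneg: "0 \<le> cc k H" by (simp add: cc_def sum_nonneg)

lemma aa_T: "aa k H + Tsum k H = (norm H)\<^sup>2"
proof -
  have "(norm H)\<^sup>2 = (\<Sum>j\<in>UNIV. (norm (column j H))\<^sup>2)" using sum_sqnorm_cols[of H] by (simp add: sqnorm_norm)
  also have "\<dots> = (norm (column k H))\<^sup>2 + Tsum k H"
    unfolding Tsum_def by (subst sum.remove[of UNIV k]) auto
  finally show ?thesis by (simp add: aa_norm)
qed

lemma aa_le: "aa k H \<le> (norm H)\<^sup>2" using aa_T[of k H] Tsum_nonneg[of k H] by linarith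
lemma T_le: "Tsum k H \<le> (norm H)\<^sup>2" using aa_T[of k H] aa_nonneg[of k H] by linarith

lemma cc_le: "cc k H \<le> aa k H * Tsum k H"
proof -
  have "cc k H \<le> (\<Sum>j\<in>UNIV - {k}. (norm (column k H))\<^sup>2 * (norm (column j H))\<^sup>2)"
    unfolding cc_def by (intro sum_mono herm_CS2)
  then show ?thesis by (simp add: aa_norm Tsum_def sum_distrib_left)
qed

lemma cc_herm_Kop: "Re (herm (column k H) (Kop k H (column k H))) = cc k H"
proof -
  have "Re (herm (column k H) (Kop k H (column k H))) = (\<Sum>j\<in>UNIV - {k}. (cmod (herm (column j H) (column k H)))\<^sup>2)"
    by (simp add: herm_Kop)
  also have "\<dots> = cc k H" unfolding cc_def
    by (intro sum.cong refl) (metis complex_mod_cnj herm_cnj)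
  finally show ?thesis .
qed

lemma aa_meas[measurable]: "aa k \<in> borel_measurable borel"
  unfolding aa_coord[abs_def] by measurable
lemma cc_meas[measurable]: "cc k \<in> borel_measurable borel"
  unfolding cc_def[abs_def] herm_sq_coord by measurable

lemma meas_chan: "f \<in> borel_measurable borel \<Longrightarrow> f \<in> borel_measurable (chan_measure :: (complex^'t::finite^'r::finite) measure)"
  unfolding chan_measure_def by simp

lemma B_bounds:
  fixes y :: real assumes "0 \<le> y"
  shows "y \<le> (1 + y)^3" "y\<^sup>2 \<le> (1 + y)^3" "y^3 \<le> (1 + y)^3" "1 \<le> (1 + y)^3"
  using assms by (auto simp: power3_eq_cube power2_eq_square algebra_simps mult_nonneg_nonneg)

lemma X_MRC_eq:
  fixes k :: "'t::finite" and H :: "complex^'t^'r::finite"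
  defines "a \<equiv> aa k H" and "c \<equiv> cc k H" and "N \<equiv> real CARD('t)"
  shows "X_MRC k r H = a / (1 + r / N * c / a)"
  unfolding X_MRC_def a_def c_def N_def aa_def cc_def ..

lemma mrc_alg:
  fixes a c s :: real
  assumes a: "0 < a" and q: "0 < a + s * c"
  shows "1 + s * (a / (1 + s * c / a)) = (a + s * (c + a\<^sup>2)) / (a + s * c)"
proof -
  have 1: "1 + s * c / a = (a + s * c) / a" using a by (simp add: field_simps)
  have 2: "a / ((a + s * c) / a) = a\<^sup>2 / (a + s * c)" using a q by (simp add: field_simps power2_eq_square)
  have 3: "1 + s * (a\<^sup>2 / (a + s * c)) = (a + s * (c + a\<^sup>2)) / (a + s * c)"
    using q by (simp add: field_simps)
  show ?thesis unfolding 1 2 3 ..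
qed

lemma mrc_pos_form:
  fixes a c N r :: real
  assumes a: "0 < a" and c: "0 \<le> c" and N: "0 < N" and r: "0 \<le> r"
  shows "ln (1 + r / N * (a / (1 + r / N * c / a))) = ln (a + r * ((c + a\<^sup>2) / N)) - ln (a + r * (c / N))"
proof -
  have s: "0 \<le> r / N" using r N by simp
  have q: "0 < a + r / N * c" using a c s mult_nonneg_nonneg[OF s c] by linarith
  have p: "0 < a + r / N * (c + a\<^sup>2)" using a c s mult_nonneg_nonneg[OF s, of "c + a\<^sup>2"] by (smt (verit) zero_le_power2)
  have "1 + r / N * (a / (1 + r / N * c / a)) = (a + r / N * (c + a\<^sup>2)) / (a + r / N * c)"
    by (rule mrc_alg[OF a q])
  then show ?thesis using p q by (simp add: ln_div)
qed

definition g1M :: "'t::finite \<Rightarrow> real \<Rightarrow> complex^'t^'r::finite \<Rightarrow> real" where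
  "g1M k r H = (aa k H)^3 / (real CARD('t) * ((aa k H + r / real CARD('t) * (cc k H + (aa k H)\<^sup>2)) * (aa k H + r / real CARD('t) * cc k H)))"

lemma cc_zero_if: "aa k H = 0 \<Longrightarrow> cc k H = 0"
  using cc_le[of k H] cc_nonneg[of k H] by simp

lemma mrc_der1:
  fixes k :: "'t::finite" and H :: "complex^'t^'r::finite"
  assumes \<rho>: "0 \<le> \<rho>"
  shows "((\<lambda>r. ln (1 + r / real CARD('t) * X_MRC k r H)) has_real_derivative g1M k \<rho> H) (at \<rho> within {0..})"
proof (cases "aa k H = 0")
  case True
  then have "(\<lambda>r. ln (1 + r / real CARD('t) * X_MRC k r H)) = (\<lambda>r. 0)" by (simp add: X_MRC_eq)
  moreover have "g1M k \<rho> H = 0" using True by (simp add: g1M_def)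
  ultimately show ?thesis by simp
next
  case False
  define a c N where "a = aa k H" and "c = cc k H" and "N = real CARD('t)"
  have a: "0 < a" using False aa_nonneg[of k H] unfolding a_def by simp
  have c: "0 \<le> c" unfolding c_def by (rule cc_nonneg)
  have N: "0 < N" unfolding N_def by simp
  have q: "0 < a + \<rho> / N * c" using a c N \<rho> by (simp add: add_pos_nonneg)
  have p: "0 < a + \<rho> / N * (c + a\<^sup>2)" using a c N \<rho> by (simp add: add_pos_nonneg)
  have p': "0 < a + \<rho> * ((c + a\<^sup>2) / N)" and q': "0 < a + \<rho> * (c / N)" using p q by simp_all
  have D: "((\<lambda>r. ln (a + r * ((c + a\<^sup>2) / N)) - ln (a + r * (c / N))) has_real_derivative
        ((c + a\<^sup>2) / N / (a + \<rho> * ((c + a\<^sup>2) / N)) - (c / N) / (a + \<rho> * (c / N)))) (at \<rho> within {0..})"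
  proof -
    have l: "((\<lambda>r. ln (a + r * \<alpha>)) has_real_derivative \<alpha> / (a + \<rho> * \<alpha>)) (at \<rho> within {0..})"
      if "0 < a + \<rho> * \<alpha>" for \<alpha>
    proof -
      have d1: "((\<lambda>r. a + r * \<alpha>) has_real_derivative \<alpha>) (at \<rho> within {0..})"
        using N by (auto intro!: derivative_eq_intros)
      from DERIV_chain2[OF DERIV_ln_divide[OF that] d1] show ?thesis by simp
    qed
    show ?thesis using DERIV_diff[OF l[OF p'] l[OF q']] by simp
  qed
  define P Q where "P = a + \<rho> / N * (c + a\<^sup>2)" and "Q = a + \<rho> / N * c"
  have PQ: "0 < P" "0 < Q" using p q unfolding P_def Q_def by auto
  have e1: "(c + a\<^sup>2) / N / (a + \<rho> * ((c + a\<^sup>2) / N)) - (c / N) / (a + \<rho> * (c / N)) = ((c + a\<^sup>2) * Q - c * P) / (N * (P * Q))"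
  proof -
    have "a + \<rho> * ((c + a\<^sup>2) / N) = P" "a + \<rho> * (c / N) = Q" unfolding P_def Q_def by simp_all
    then show ?thesis using PQ N by (simp add: field_simps)
  qed
  have e2: "(c + a\<^sup>2) * Q - c * P = a ^ 3"
    unfolding P_def Q_def using N by (simp add: field_simps power2_eq_square power3_eq_cube)
  have E: "(c + a\<^sup>2) / N / (a + \<rho> * ((c + a\<^sup>2) / N)) - (c / N) / (a + \<rho> * (c / N)) = g1M k \<rho> H"
    unfolding e1 e2 by (simp add: g1M_def a_def c_def N_def P_def Q_def)
  show ?thesis
  proof (rule has_field_derivative_transform_within[where d=1])
    show "((\<lambda>r. ln (a + r * ((c + a\<^sup>2) / N)) - ln (a + r * (c / N))) has_real_derivative g1M k \<rho> H) (at \<rho> within {0..})"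
      using D E by simp
    fix x :: real assume "x \<in> {0..}"
    then show "ln (a + x * ((c + a\<^sup>2) / N)) - ln (a + x * (c / N)) = ln (1 + x / real CARD('t) * X_MRC k x H)"
      using mrc_pos_form[OF a c N, of x] unfolding X_MRC_eq a_def c_def N_def by simp
  qed (use \<rho> in auto)
qed

lemma div_le_self: "0 \<le> (x::real) \<Longrightarrow> 1 \<le> N \<Longrightarrow> x / N \<le> x"
  using divide_left_mono[of 1 N x] by simp

lemma g1M_0: fixes k :: "'t::finite" shows "g1M k 0 H = aa k H / real CARD('t)"
  by (cases "aa k H = 0") (simp_all add: g1M_def power2_eq_square power3_eq_cube)

lemma g1M_bound:
  fixes k :: "'t::finite" and H :: "complex^'t^'r::finite"
  assumes \<rho>: "0 \<le> \<rho>"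
  shows "\<bar>g1M k \<rho> H\<bar> \<le> aa k H"
proof (cases "aa k H = 0")
  case True then show ?thesis by (simp add: g1M_def)
next
  case False
  define a c N where "a = aa k H" and "c = cc k H" and "N = real CARD('t)"
  have a: "0 < a" using False aa_nonneg[of k H] unfolding a_def by simp
  have c: "0 \<le> c" unfolding c_def by (rule cc_nonneg)
  have N: "1 \<le> N" unfolding N_def by (simp add: Suc_le_eq)
  define P Q where "P = a + \<rho> / N * (c + a\<^sup>2)" and "Q = a + \<rho> / N * c"
  have P: "a \<le> P" unfolding P_def using \<rho> c N by (simp add: mult_nonneg_nonneg)
  have Q: "a \<le> Q" unfolding Q_def using \<rho> c N by (simp add: mult_nonneg_nonneg)
  have "a * a \<le> P * Q" using P Q a by (intro mult_mono) auto
  then have "a ^ 3 \<le> a * (P * Q)" using a by (simp add: power3_eq_cube)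
  then have "a ^ 3 / (P * Q) \<le> a" using a P Q by (simp add: divide_le_eq)
  moreover have "a ^ 3 / (N * (P * Q)) \<le> a ^ 3 / (P * Q)"
    using a P Q N by (intro divide_left_mono) auto
  moreover have "0 \<le> a ^ 3 / (N * (P * Q))" using a P Q N by simp
  ultimately show ?thesis unfolding g1M_def a_def[symmetric] c_def[symmetric] N_def[symmetric] P_def[symmetric] Q_def[symmetric]
    by simp
qed

lemma mrc_der2:
  fixes k :: "'t::finite" and H :: "complex^'t^'r::finite"
  assumes \<rho>: "0 \<le> \<rho>"
  shows "\<exists>D. ((\<lambda>r. g1M k r H) has_real_derivative D) (at \<rho> within {0..}) \<and> \<bar>D\<bar> \<le> 2 * cc k H + (aa k H)\<^sup>2
      \<and> (\<rho> = 0 \<longrightarrow> D = - (2 * cc k H + (aa k H)\<^sup>2) / (real CARD('t))\<^sup>2)"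
proof (cases "aa k H = 0")
  case True
  then have "(\<lambda>r. g1M k r H) = (\<lambda>r. 0)" by (simp add: g1M_def fun_eq_iff)
  then show ?thesis using True cc_zero_if[OF True] by (intro exI[of _ 0]) simp
next
  case False
  define a c N where "a = aa k H" and "c = cc k H" and "N = real CARD('t)"
  have a: "0 < a" using False aa_nonneg[of k H] unfolding a_def by simp
  have c: "0 \<le> c" unfolding c_def by (rule cc_nonneg)
  have N: "1 \<le> N" unfolding N_def by (simp add: Suc_le_eq)
  define P Q where "P r = a + r * ((c + a\<^sup>2) / N)" and "Q r = a + r * (c / N)" for r
  define P' Q' where "P' = (c + a\<^sup>2) / N" and "Q' = c / N"
  have P: "a \<le> P \<rho>" unfolding P_def using \<rho> c N by (simp add: mult_nonneg_nonneg)
  have Q: "a \<le> Q \<rho>" unfolding Q_def using \<rho> c N by (simp add: mult_nonneg_nonneg)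
  have P'Q': "0 \<le> P'" "0 \<le> Q'" unfolding P'_def Q'_def using c N by auto
  have eqf: "(\<lambda>r. g1M k r H) = (\<lambda>r. a ^ 3 / (N * (P r * Q r)))"
    using N by (simp add: g1M_def fun_eq_iff a_def c_def N_def P_def Q_def)
  have dP: "(P has_real_derivative P') (at \<rho> within {0..})" unfolding P_def P'_def
    using N by (auto intro!: derivative_eq_intros)
  have dQ: "(Q has_real_derivative Q') (at \<rho> within {0..})" unfolding Q_def Q'_def
    using N by (auto intro!: derivative_eq_intros)
  have dD: "((\<lambda>r. N * (P r * Q r)) has_real_derivative N * (P' * Q \<rho> + Q' * P \<rho>)) (at \<rho> within {0..})"
    using DERIV_cmult[OF DERIV_mult[OF dP dQ], of N] by simp
  have nz: "N * (P \<rho> * Q \<rho>) \<noteq> 0" using P Q a N by auto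
  define D where "D = (0 * (N * (P \<rho> * Q \<rho>)) - a ^ 3 * (N * (P' * Q \<rho> + Q' * P \<rho>))) / (N * (P \<rho> * Q \<rho>) * (N * (P \<rho> * Q \<rho>)))"
  have der: "((\<lambda>r. g1M k r H) has_real_derivative D) (at \<rho> within {0..})"
    unfolding eqf D_def by (rule DERIV_divide[OF DERIV_const dD nz])
  have Dabs: "\<bar>D\<bar> = (a ^ 3 / (P \<rho> * Q \<rho>)) * (P' / P \<rho> + Q' / Q \<rho>) / N"
  proof -
    have "D = - ((a ^ 3 / (P \<rho> * Q \<rho>)) * (P' / P \<rho> + Q' / Q \<rho>) / N)"
      using a P Q N P'Q' unfolding D_def by (simp add: field_simps power3_eq_cube)
    moreover have "0 \<le> (a ^ 3 / (P \<rho> * Q \<rho>)) * (P' / P \<rho> + Q' / Q \<rho>) / N"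
      using a P Q N P'Q' by (intro divide_nonneg_pos mult_nonneg_nonneg add_nonneg_nonneg divide_nonneg_nonneg) auto
    ultimately show ?thesis by (simp only: abs_minus_cancel abs_of_nonneg)
  qed
  have b1: "a ^ 3 / (P \<rho> * Q \<rho>) \<le> a"
  proof -
    have "a * a \<le> P \<rho> * Q \<rho>" using P Q a by (intro mult_mono) auto
    then have "a ^ 3 \<le> a * (P \<rho> * Q \<rho>)" using a by (simp add: power3_eq_cube)
    then show ?thesis using a P Q by (simp add: divide_le_eq)
  qed
  have b2: "P' / P \<rho> + Q' / Q \<rho> \<le> P' / a + Q' / a"
    using a P Q P'Q' by (intro add_mono divide_left_mono) auto
  have "\<bar>D\<bar> \<le> a * (P' / a + Q' / a) / N"
  proof -
    have "(a ^ 3 / (P \<rho> * Q \<rho>)) * (P' / P \<rho> + Q' / Q \<rho>) \<le> a * (P' / a + Q' / a)"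
    proof (rule mult_mono[OF b1 b2])
      show "0 \<le> a" using a by simp
      show "0 \<le> P' / P \<rho> + Q' / Q \<rho>" using P'Q' P Q a by simp
    qed
    then show ?thesis unfolding Dabs by (rule divide_right_mono) (use N in simp)
  qed
  also have "\<dots> = (2 * c + a\<^sup>2) / N / N" using a N unfolding P'_def Q'_def by (simp add: field_simps)
  also have "\<dots> \<le> 2 * c + a\<^sup>2"
  proof -
    have x: "0 \<le> 2 * c + a\<^sup>2" using c by simp
    have "(2 * c + a\<^sup>2) / N \<le> 2 * c + a\<^sup>2" by (rule div_le_self[OF x N])
    moreover have "(2 * c + a\<^sup>2) / N / N \<le> (2 * c + a\<^sup>2) / N" by (rule div_le_self[OF _ N]) (use x N in simp)
    ultimately show ?thesis by linarith
  qed
  finally have bd: "\<bar>D\<bar> \<le> 2 * c + a\<^sup>2" .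
  have at0: "\<rho> = 0 \<longrightarrow> D = - (2 * c + a\<^sup>2) / N\<^sup>2"
  proof
    assume "\<rho> = 0"
    then have "P \<rho> = a" "Q \<rho> = a" unfolding P_def Q_def by simp_all
    then show "D = - (2 * c + a\<^sup>2) / N\<^sup>2" unfolding D_def P'_def Q'_def
      using a N by (simp add: field_simps power2_eq_square power3_eq_cube)
  qed
  show ?thesis using der bd at0 unfolding a_def c_def N_def by blast
qed

lemma X_MRC_bounds:
  fixes k :: "'t::finite" and H :: "complex^'t^'r::finite"
  assumes r: "0 \<le> r"
  shows "0 \<le> X_MRC k r H" "X_MRC k r H \<le> aa k H"
proof -
  define a c N where "a = aa k H" and "c = cc k H" and "N = real CARD('t)"
  have a: "0 \<le> a" unfolding a_def by (rule aa_nonneg)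
  have c: "0 \<le> c" unfolding c_def by (rule cc_nonneg)
  have N: "0 < N" unfolding N_def by simp
  have d: "1 \<le> 1 + r / N * c / a" using a c N r by simp
  show "0 \<le> X_MRC k r H" unfolding X_MRC_eq a_def[symmetric] c_def[symmetric] N_def[symmetric]
    using a d by (intro divide_nonneg_nonneg) auto
  show "X_MRC k r H \<le> aa k H" unfolding X_MRC_eq a_def[symmetric] c_def[symmetric] N_def[symmetric]
    using a d div_le_self by simp
qed

lemma g_MRC_bounds:
  fixes k :: "'t::finite" and H :: "complex^'t^'r::finite"
  assumes r: "r \<in> {0..<1}"
  shows "\<bar>ln (1 + r / real CARD('t) * X_MRC k r H)\<bar> \<le> aa k H"
proof -
  define N where "N = real CARD('t)"
  have N: "1 \<le> N" unfolding N_def by (simp add: Suc_le_eq)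
  have s: "0 \<le> r / N" "r / N \<le> 1" using r N by (auto simp: divide_le_eq)
  have y0: "0 \<le> r / N * X_MRC k r H" using s X_MRC_bounds[of r k H] r by (intro mult_nonneg_nonneg) auto
  have "r / N * X_MRC k r H \<le> 1 * aa k H"
    using s X_MRC_bounds[of r k H] r by (intro mult_mono) auto
  moreover have "0 \<le> ln (1 + r / N * X_MRC k r H)" using y0 by simp
  moreover have "ln (1 + r / N * X_MRC k r H) \<le> r / N * X_MRC k r H" using y0 by (rule ln_add_one_self_le_self)
  ultimately show ?thesis unfolding N_def by simp
qed

lemma X_MRC_meas[measurable]: fixes k :: "'t::finite" shows "(X_MRC k r :: complex^'t^'r::finite \<Rightarrow> real) \<in> borel_measurable borel"
proof -
  have "(X_MRC k r :: complex^'t^'r::finite \<Rightarrow> real) = (\<lambda>H. aa k H / (1 + r / real CARD('t) * cc k H / aa k H))"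
    using X_MRC_eq[of k r] by blast
  then show ?thesis by simp
qed

theorem MRC_part:
  fixes k :: "'t::finite"
  defines "Ntr \<equiv> real CARD('t)" and "Nrr \<equiv> real CARD('r::finite)"
  shows "low_snr (rate (X_MRC k :: real \<Rightarrow> complex^'t^'r \<Rightarrow> real))
            (ln 2 / Nrr) (2 * Ntr * Nrr / (2 * Ntr + Nrr - 1))"
proof -
  let ?M = "chan_measure :: (complex^'t^'r) measure"
  define B where "B H = (1 + (norm H)\<^sup>2)^3" for H :: "complex^'t^'r"
  have iB: "integrable ?M B" unfolding B_def by (rule int_bound3)
  have iB3: "integrable ?M (\<lambda>H. 3 * B H)" using iB by simp
  have aB: "aa k H \<le> B H" for H :: "complex^'t^'r"
    using aa_le[of k H] B_bounds(1)[of "(norm H)\<^sup>2"] unfolding B_def by simp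
  have cB: "2 * cc k H + (aa k H)\<^sup>2 \<le> 3 * B H" for H :: "complex^'t^'r"
  proof -
    have "cc k H \<le> (norm H)\<^sup>2 * (norm H)\<^sup>2"
      using cc_le[of k H] aa_le[of k H] T_le[of k H] aa_nonneg[of k H] Tsum_nonneg[of k H]
      by (meson mult_mono order_trans zero_le_power2)
    moreover have "(aa k H)\<^sup>2 \<le> ((norm H)\<^sup>2)\<^sup>2" using aa_le[of k H] aa_nonneg[of k H] by (rule_tac power_mono) auto
    moreover have "((norm H)\<^sup>2)\<^sup>2 \<le> B H" using B_bounds(2)[of "(norm H)\<^sup>2"] unfolding B_def by simp
    ultimately show ?thesis by (simp add: power2_eq_square)
  qed
  have rate_eq: "rate (X_MRC k :: real \<Rightarrow> complex^'t^'r \<Rightarrow> real) = (\<lambda>\<rho>. Ntr * (\<integral>H. ln (1 + \<rho> / real CARD('t) * X_MRC k \<rho> H) \<partial>?M))"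
    unfolding rate_def Ntr_def by simp
  show ?thesis unfolding rate_eq Ntr_def Nrr_def
  proof (rule receiver_main[where gd="g1M k" and Ba=B and Bb="\<lambda>H. 3 * B H"])
    fix \<rho> :: real assume r: "\<rho> \<in> {0..<1}"
    show "integrable ?M (\<lambda>H. ln (1 + \<rho> / real CARD('t) * X_MRC k \<rho> H))"
    proof (rule Bochner_Integration.integrable_bound[OF int_aa[of k]])
      show "(\<lambda>H. ln (1 + \<rho> / real CARD('t) * X_MRC k \<rho> H)) \<in> borel_measurable ?M"
        by (rule meas_chan) measurable
      show "AE H in ?M. norm (ln (1 + \<rho> / real CARD('t) * X_MRC k \<rho> H)) \<le> norm (aa k H)"
      proof (rule AE_I2)
        fix H :: "complex^'t^'r"
        have "\<bar>ln (1 + \<rho> / real CARD('t) * X_MRC k \<rho> H)\<bar> \<le> aa k H" by (rule g_MRC_bounds[OF r])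
        then show "norm (ln (1 + \<rho> / real CARD('t) * X_MRC k \<rho> H)) \<le> norm (aa k H)"
          using aa_nonneg[of k H] by simp
      qed
    qed
  next
    fix H :: "complex^'t^'r" and \<rho> :: real assume r: "\<rho> \<in> {0..<1}"
    show "((\<lambda>r. ln (1 + r / real CARD('t) * X_MRC k r H)) has_real_derivative g1M k \<rho> H) (at \<rho> within {0..})"
      using r by (intro mrc_der1) simp
    show "\<bar>g1M k \<rho> H\<bar> \<le> B H" using g1M_bound[of \<rho> k H] aB[of H] r by simp
    have ex: "\<forall>r\<in>{0..<1}. \<exists>D. ((\<lambda>r. g1M k r H) has_real_derivative D) (at r within {0..}) \<and> \<bar>D\<bar> \<le> 3 * B H"
    proof
      fix r :: real assume "r \<in> {0..<1}"
      then obtain D where "((\<lambda>r. g1M k r H) has_real_derivative D) (at r within {0..})" "\<bar>D\<bar> \<le> 2 * cc k H + (aa k H)\<^sup>2"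
        using mrc_der2[of r k H] by auto
      then show "\<exists>D. ((\<lambda>r. g1M k r H) has_real_derivative D) (at r within {0..}) \<and> \<bar>D\<bar> \<le> 3 * B H"
        using cB[of H] by (intro exI[of _ D]) auto
    qed
    then obtain D where D: "\<And>r. r \<in> {0..<1} \<Longrightarrow> ((\<lambda>r. g1M k r H) has_real_derivative D r) (at r within {0..}) \<and> \<bar>D r\<bar> \<le> 3 * B H"
      by metis
    have "\<bar>g1M k \<rho> H - g1M k 0 H\<bar> \<le> 3 * B H * \<bar>\<rho> - 0\<bar>"
      by (rule lip_from_deriv[where f'=D]) (use D r in auto)
    then show "\<bar>g1M k \<rho> H - g1M k 0 H\<bar> \<le> 3 * B H * \<rho>" using r by simp
  next
    show "integrable ?M B" by (rule iB)
    show "integrable ?M (\<lambda>H. 3 * B H)" by (rule iB3)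
    fix H :: "complex^'t^'r"
    show "g1M k 0 H = aa k H / real CARD('t)" by (rule g1M_0)
    show "((\<lambda>r. g1M k r H) has_real_derivative - (2 * cc k H + (aa k H)\<^sup>2) / (real CARD('t))\<^sup>2) (at 0 within {0..})"
      using mrc_der2[of 0 k H] by auto
  qed
qed

context
  fixes k :: "'t::finite" and H :: "complex^'t^'r::finite"
begin

definition "hh = column k H"
definition "uu s = Rop s k H hh"
definition "Xs s = Re (herm hh (uu s))"
definition "Dd s t = Re (herm (uu s) (Kop k H (uu t)))"

lemma norm_uu: "0 \<le> s \<Longrightarrow> norm (uu s) \<le> norm hh"
  unfolding uu_def by (rule norm_Rop)

lemma norm_hh_sq: "(norm hh)\<^sup>2 = aa k H" by (simp add: hh_def aa_norm)

lemma Xdiff: assumes s: "0 \<le> s" and t: "0 \<le> t" shows "Xs s - Xs t = (t - s) * Dd s t"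
proof -
  have "Xs s - Xs t = Re (herm hh (uu s - uu t))" unfolding Xs_def by (simp add: herm_diff_right)
  also have "\<dots> = Re (herm hh (complex_of_real (t - s) *s Rop s k H (Kop k H (uu t))))"
    unfolding uu_def by (simp only: resolvent[OF s t])
  also have "\<dots> = (t - s) * Re (herm (Rop s k H hh) (Kop k H (uu t)))"
    by (subst herm_scale_right) (simp add: herm_Rop_sym[OF s])
  finally show ?thesis unfolding Dd_def uu_def by simp
qed

lemma norm_Kuu: "0 \<le> t \<Longrightarrow> norm (Kop k H (uu t)) \<le> Tsum k H * norm hh"
  using norm_Kop[of k H "uu t"] norm_uu[of t] Tsum_nonneg[of k H]
  by (meson mult_left_mono order_trans)

lemma Dd_bound: assumes s: "0 \<le> s" and t: "0 \<le> t" shows "\<bar>Dd s t\<bar> \<le> Tsum k H * aa k H"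
proof -
  have "\<bar>Dd s t\<bar> \<le> cmod (herm (uu s) (Kop k H (uu t)))" unfolding Dd_def by (rule abs_Re_le_cmod)
  also have "\<dots> \<le> norm (uu s) * norm (Kop k H (uu t))" by (rule herm_CS)
  also have "\<dots> \<le> norm hh * (Tsum k H * norm hh)"
    by (intro mult_mono norm_uu norm_Kuu s t) auto
  finally show ?thesis by (simp add: norm_hh_sq[symmetric] power2_eq_square algebra_simps)
qed

lemma uu_lip: assumes s: "0 \<le> s" and t: "0 \<le> t" shows "norm (uu s - uu t) \<le> \<bar>s - t\<bar> * (Tsum k H * norm hh)"
proof -
  have "norm (uu s - uu t) = \<bar>t - s\<bar> * norm (Rop s k H (Kop k H (uu t)))"
    unfolding uu_def resolvent[OF s t] norm_scale_vec norm_of_real ..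
  also have "\<dots> \<le> \<bar>t - s\<bar> * norm (Kop k H (uu t))"
    by (intro mult_left_mono norm_Rop s) auto
  also have "\<dots> \<le> \<bar>t - s\<bar> * (Tsum k H * norm hh)"
    by (intro mult_left_mono norm_Kuu t) auto
  finally show ?thesis by (simp add: abs_minus_commute)
qed

lemma herm_diff_bound:
  "cmod (herm x y) \<le> norm x * B \<Longrightarrow> \<bar>Re (herm x y)\<bar> \<le> norm x * B"
  using abs_Re_le_cmod order_trans by blast

lemma Dd_cont1: assumes s: "0 \<le> s" and t: "0 \<le> t"
  shows "\<bar>Dd s t - Dd t t\<bar> \<le> \<bar>s - t\<bar> * ((Tsum k H)\<^sup>2 * aa k H)"
proof -
  have "\<bar>Dd s t - Dd t t\<bar> = \<bar>Re (herm (uu s - uu t) (Kop k H (uu t)))\<bar>"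
    unfolding Dd_def by (simp add: herm_diff_left)
  also have "\<dots> \<le> norm (uu s - uu t) * norm (Kop k H (uu t))"
    using herm_CS abs_Re_le_cmod order_trans by blast
  also have "\<dots> \<le> (\<bar>s - t\<bar> * (Tsum k H * norm hh)) * (Tsum k H * norm hh)"
    by (intro mult_mono uu_lip norm_Kuu s t) (auto simp: Tsum_nonneg)
  finally show ?thesis by (simp add: norm_hh_sq[symmetric] power2_eq_square algebra_simps)
qed

lemma Dd_cont2: assumes s: "0 \<le> s" and t: "0 \<le> t"
  shows "\<bar>Dd s s - Dd t t\<bar> \<le> \<bar>s - t\<bar> * (2 * ((Tsum k H)\<^sup>2 * aa k H))"
proof -
  have e: "Dd s s - Dd t t = Re (herm (uu s - uu t) (Kop k H (uu s))) + Re (herm (uu t) (Kop k H (uu s - uu t)))"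
    unfolding Dd_def by (simp add: herm_diff_left herm_diff_right Kop_diff)
  have b1: "\<bar>Re (herm (uu s - uu t) (Kop k H (uu s)))\<bar> \<le> \<bar>s - t\<bar> * ((Tsum k H)\<^sup>2 * aa k H)"
  proof -
    have "\<bar>Re (herm (uu s - uu t) (Kop k H (uu s)))\<bar> \<le> norm (uu s - uu t) * norm (Kop k H (uu s))"
      using herm_CS abs_Re_le_cmod order_trans by blast
    also have "\<dots> \<le> (\<bar>s - t\<bar> * (Tsum k H * norm hh)) * (Tsum k H * norm hh)"
      by (intro mult_mono uu_lip norm_Kuu s t) (auto simp: Tsum_nonneg)
    finally show ?thesis by (simp add: norm_hh_sq[symmetric] power2_eq_square algebra_simps)
  qed
  have b2: "\<bar>Re (herm (uu t) (Kop k H (uu s - uu t)))\<bar> \<le> \<bar>s - t\<bar> * ((Tsum k H)\<^sup>2 * aa k H)"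
  proof -
    have "\<bar>Re (herm (uu t) (Kop k H (uu s - uu t)))\<bar> \<le> norm (uu t) * norm (Kop k H (uu s - uu t))"
      using herm_CS abs_Re_le_cmod order_trans by blast
    also have "\<dots> \<le> norm hh * (Tsum k H * norm (uu s - uu t))"
      by (intro mult_mono norm_uu norm_Kop t) auto
    also have "\<dots> \<le> norm hh * (Tsum k H * (\<bar>s - t\<bar> * (Tsum k H * norm hh)))"
      by (intro mult_left_mono uu_lip s t Tsum_nonneg) (auto intro: Tsum_nonneg)
    finally show ?thesis by (simp add: norm_hh_sq[symmetric] power2_eq_square algebra_simps)
  qed
  show ?thesis unfolding e using b1 b2 by linarith
qed

lemma Xs_bounds: assumes s: "0 \<le> s" shows "0 \<le> Xs s" "Xs s \<le> aa k H"
proof -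
  have h: "hh = Mop s k H (uu s)" unfolding uu_def by (rule Rop_inv(1)[OF s, symmetric])
  have "Xs s = Re (herm (uu s) (Mop s k H (uu s)))"
    unfolding Xs_def by (subst h) (simp add: herm_Mop_sym)
  then show "0 \<le> Xs s" using Re_herm_Mop[OF s, of "uu s" k H] by (metis order_trans zero_le_power2)
  have "Xs s \<le> cmod (herm hh (uu s))" unfolding Xs_def by (rule complex_Re_le_cmod)
  also have "\<dots> \<le> norm hh * norm (uu s)" by (rule herm_CS)
  also have "\<dots> \<le> norm hh * norm hh" by (intro mult_left_mono norm_uu s) auto
  finally show "Xs s \<le> aa k H" by (simp add: norm_hh_sq[symmetric] power2_eq_square)
qed

lemma Dd_nonneg: "0 \<le> Dd s s" unfolding Dd_def by (rule Re_herm_Kop_nonneg)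

lemma Xs0: "Xs 0 = aa k H" unfolding Xs_def uu_def Rop_zero
  by (simp add: Re_herm_self norm_hh_sq)

lemma Dd00: "Dd 0 0 = cc k H" unfolding Dd_def uu_def Rop_zero hh_def by (rule cc_herm_Kop)

lemma eventually_within_ge0: "(\<And>y. 0 \<le> y \<Longrightarrow> P y) \<Longrightarrow> eventually P (at (x::real) within {0..})"
  unfolding eventually_at_filter by (intro always_eventually) auto

lemma Xs_deriv: assumes s: "0 \<le> s" shows "(Xs has_real_derivative - Dd s s) (at s within {0..})"
  unfolding has_field_derivative_iff
proof -
  have lim: "((\<lambda>y. Dd y s - Dd s s) \<longlongrightarrow> 0) (at s within {0..})"
  proof (rule Lim_null_comparison)
    show "\<forall>\<^sub>F y in at s within {0..}. norm (Dd y s - Dd s s) \<le> \<bar>y - s\<bar> * ((Tsum k H)\<^sup>2 * aa k H)"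
      by (rule eventually_within_ge0) (use Dd_cont1 s in auto)
    have "((\<lambda>y. \<bar>y - s\<bar> * ((Tsum k H)\<^sup>2 * aa k H)) \<longlongrightarrow> \<bar>s - s\<bar> * ((Tsum k H)\<^sup>2 * aa k H)) (at s within {0..})"
      by (intro tendsto_intros)
    then show "((\<lambda>y. \<bar>y - s\<bar> * ((Tsum k H)\<^sup>2 * aa k H)) \<longlongrightarrow> 0) (at s within {0..})" by simp
  qed
  then have "((\<lambda>y. - Dd y s) \<longlongrightarrow> - Dd s s) (at s within {0..})"
    by (metis (no_types) LIM_zero_cancel tendsto_minus)
  then show "((\<lambda>y. (Xs y - Xs s) / (y - s)) \<longlongrightarrow> - Dd s s) (at s within {0..})"
  proof (rule Lim_transform_eventually)
    show "\<forall>\<^sub>F y in at s within {0..}. - Dd y s = (Xs y - Xs s) / (y - s)"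
      unfolding eventually_at_filter
    proof (intro always_eventually allI impI)
      fix y assume y: "y \<noteq> s" "y \<in> {0..}"
      then have "y - s \<noteq> 0" by simp
      then show "- Dd y s = (Xs y - Xs s) / (y - s)" using y by (simp add: Xdiff s field_simps)
    qed
  qed
qed

end

lemma mult_cont_deriv0:
  fixes f :: "real \<Rightarrow> real"
  assumes "(f \<longlongrightarrow> f 0) (at 0 within {0..})" and N: "N \<noteq> 0"
  shows "((\<lambda>\<rho>. \<rho> / N * f \<rho>) has_real_derivative f 0 / N) (at 0 within {0..})"
  unfolding has_field_derivative_iff
proof -
  have "((\<lambda>y. f y / N) \<longlongrightarrow> f 0 / N) (at 0 within {0..})" by (intro tendsto_intros assms)
  then show "((\<lambda>y. (y / N * f y - 0 / N * f 0) / (y - 0)) \<longlongrightarrow> f 0 / N) (at 0 within {0..})"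
  proof (rule Lim_transform_eventually)
    show "\<forall>\<^sub>F y in at 0 within {0..}. f y / N = (y / N * f y - 0 / N * f 0) / (y - 0)"
      unfolding eventually_at_filter by (intro always_eventually) auto
  qed
qed

lemma image_div_atLeast: "0 < (N::real) \<Longrightarrow> (\<lambda>\<rho>. \<rho> / N) ` {0..} = {0..}"
proof
  assume N: "0 < N"
  show "(\<lambda>\<rho>. \<rho> / N) ` {0..} \<subseteq> {0..}" using N by auto
  show "{0..} \<subseteq> (\<lambda>\<rho>. \<rho> / N) ` {0..}"
  proof
    fix x :: real assume "x \<in> {0..}"
    then have "x = (x * N) / N" "x * N \<in> {0..}" using N by auto
    then show "x \<in> (\<lambda>\<rho>. \<rho> / N) ` {0..}" by blast
  qed
qed

lemma lip_cont0:
  fixes f :: "real \<Rightarrow> real"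
  assumes "\<And>\<rho>. 0 \<le> \<rho> \<Longrightarrow> \<bar>f \<rho> - f 0\<bar> \<le> C * \<rho>"
  shows "(f \<longlongrightarrow> f 0) (at 0 within {0..})"
proof -
  have "((\<lambda>\<rho>. f \<rho> - f 0) \<longlongrightarrow> 0) (at 0 within {0..})"
  proof (rule Lim_null_comparison)
    show "\<forall>\<^sub>F \<rho> in at 0 within {0..}. norm (f \<rho> - f 0) \<le> C * \<rho>"
      unfolding eventually_at_filter by (intro always_eventually) (auto intro: assms)
    have "((\<lambda>\<rho>. C * \<rho>) \<longlongrightarrow> C * 0) (at 0 within {0..})" by (intro tendsto_intros)
    then show "((\<lambda>\<rho>. C * \<rho>) \<longlongrightarrow> 0) (at 0 within {0..})" by simp
  qed
  then show ?thesis by (rule LIM_zero_cancel)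
qed

context
  fixes k :: "'t::finite" and H :: "complex^'t^'r::finite"
begin

lemma X_MMSE_Xs: "X_MMSE k \<rho> H = Xs k H (\<rho> / real CARD('t))"
  unfolding X_MMSE_def Xs_def uu_def Rop_def hh_def ..

definition "g1N \<rho> = (Xs k H (\<rho> / real CARD('t)) - \<rho> / real CARD('t) * Dd k H (\<rho> / real CARD('t)) (\<rho> / real CARD('t)))
   / (real CARD('t) * (1 + \<rho> / real CARD('t) * Xs k H (\<rho> / real CARD('t))))"

lemma Xs_comp_deriv: assumes \<rho>: "0 \<le> \<rho>"
  shows "((\<lambda>\<rho>. Xs k H (\<rho> / real CARD('t))) has_real_derivative - Dd k H (\<rho> / real CARD('t)) (\<rho> / real CARD('t)) * (1 / real CARD('t))) (at \<rho> within {0..})"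
proof -
  let ?N = "real CARD('t)"
  have N: "0 < ?N" by simp
  have g: "((\<lambda>\<rho>. \<rho> / ?N) has_real_derivative 1 / ?N) (at \<rho> within {0..})"
    by (auto intro!: derivative_eq_intros)
  have f: "(Xs k H has_real_derivative - Dd k H (\<rho> / ?N) (\<rho> / ?N)) (at (\<rho> / ?N) within ((\<lambda>\<rho>. \<rho> / ?N) ` {0..}))"
    unfolding image_div_atLeast[OF N] using \<rho> N by (intro Xs_deriv) simp
  from DERIV_image_chain[OF f g] show ?thesis by (simp add: comp_def)
qed

lemma mmse_der1: assumes \<rho>: "0 \<le> \<rho>"
  shows "((\<lambda>r. ln (1 + r / real CARD('t) * X_MMSE k r H)) has_real_derivative g1N \<rho>) (at \<rho> within {0..})"
proof -
  let ?N = "real CARD('t)"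
  define s where "s = \<rho> / ?N"
  have N: "0 < ?N" by simp
  have s0: "0 \<le> s" unfolding s_def using \<rho> by simp
  have dp: "((\<lambda>r. r / ?N * Xs k H (r / ?N)) has_real_derivative (1 / ?N) * Xs k H s + \<rho> / ?N * (- Dd k H s s * (1 / ?N))) (at \<rho> within {0..})"
  proof -
    have "((\<lambda>r. r / ?N) has_real_derivative 1 / ?N) (at \<rho> within {0..})" by (auto intro!: derivative_eq_intros)
    from DERIV_mult[OF this Xs_comp_deriv[OF \<rho>]] show ?thesis unfolding s_def by (simp add: mult_ac)
  qed
  have pos: "0 < 1 + \<rho> / ?N * Xs k H s" using Xs_bounds(1)[OF s0, of k H] \<rho> N
    by (simp add: add_pos_nonneg)
  have dl: "((\<lambda>r. ln (1 + r / ?N * Xs k H (r / ?N))) has_real_derivative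
      1 / (1 + \<rho> / ?N * Xs k H (\<rho> / ?N)) * ((1 / ?N) * Xs k H s + \<rho> / ?N * (- Dd k H s s * (1 / ?N)))) (at \<rho> within {0..})"
  proof -
    have d1: "((\<lambda>r. 1 + r / ?N * Xs k H (r / ?N)) has_real_derivative (1 / ?N) * Xs k H s + \<rho> / ?N * (- Dd k H s s * (1 / ?N))) (at \<rho> within {0..})"
      using DERIV_add[OF DERIV_const dp] by simp
    have "0 < 1 + \<rho> / ?N * Xs k H (\<rho> / ?N)" using pos unfolding s_def .
    from DERIV_chain2[OF DERIV_ln_divide[OF this] d1] show ?thesis .
  qed
  have eq: "1 / (1 + \<rho> / ?N * Xs k H (\<rho> / ?N)) * ((1 / ?N) * Xs k H s + \<rho> / ?N * (- Dd k H s s * (1 / ?N))) = g1N \<rho>"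
    unfolding g1N_def s_def[symmetric] using pos N unfolding s_def[symmetric] by (simp add: field_simps)
  show ?thesis using dl unfolding eq X_MMSE_Xs .
qed

lemma g1N_0: "g1N 0 = aa k H / real CARD('t)"
  unfolding g1N_def by (simp add: Xs0)

lemma g1N_bound: assumes \<rho>: "\<rho> \<in> {0..<1}" shows "\<bar>g1N \<rho>\<bar> \<le> aa k H + Tsum k H * aa k H"
proof -
  let ?N = "real CARD('t)"
  define s where "s = \<rho> / ?N"
  have N: "1 \<le> ?N" by (simp add: Suc_le_eq)
  have s1: "s \<le> \<rho>" unfolding s_def using \<rho> N div_le_self[of \<rho> ?N] by auto
  have s0: "0 \<le> s" unfolding s_def using \<rho> by simp
  have s: "0 \<le> s" "s \<le> 1" using s0 s1 \<rho> by auto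
  have X: "0 \<le> Xs k H s" "Xs k H s \<le> aa k H" using Xs_bounds[OF s(1), of k H] by auto
  have D: "0 \<le> Dd k H s s" "Dd k H s s \<le> Tsum k H * aa k H" using Dd_nonneg[of k H s] Dd_bound[OF s(1) s(1), of k H] by auto
  have den: "1 \<le> ?N * (1 + s * Xs k H s)"
  proof -
    have "1 \<le> 1 + s * Xs k H s" using s X by simp
    have "1 * 1 \<le> ?N * (1 + s * Xs k H s)" by (rule mult_mono) (use N \<open>1 \<le> 1 + s * Xs k H s\<close> in auto)
    then show ?thesis by simp
  qed
  have num: "\<bar>Xs k H s - s * Dd k H s s\<bar> \<le> aa k H + Tsum k H * aa k H"
  proof -
    have "s * Dd k H s s \<le> 1 * (Tsum k H * aa k H)" using s D by (intro mult_mono) auto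
    moreover have "0 \<le> s * Dd k H s s" using s D by simp
    ultimately show ?thesis using X by linarith
  qed
  have "\<bar>g1N \<rho>\<bar> = \<bar>Xs k H s - s * Dd k H s s\<bar> / (?N * (1 + s * Xs k H s))"
  proof -
    have "g1N \<rho> = (Xs k H s - s * Dd k H s s) / (?N * (1 + s * Xs k H s))"
      unfolding g1N_def s_def ..
    then show ?thesis using den by (simp only: abs_divide abs_of_nonneg[of "?N * (1 + s * Xs k H s)"])
  qed
  also have "\<dots> \<le> \<bar>Xs k H s - s * Dd k H s s\<bar>" using den by (rule div_le_self[rotated]) simp
  finally show ?thesis using num by linarith
qed

lemma g1N_lip: assumes \<rho>: "\<rho> \<in> {0..<1}" shows "\<bar>g1N \<rho> - g1N 0\<bar> \<le> (2 * (Tsum k H * aa k H) + (aa k H)\<^sup>2) * \<rho>"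
proof -
  let ?N = "real CARD('t)"
  define s where "s = \<rho> / ?N"
  define a X D T where "a = aa k H" and "X = Xs k H s" and "D = Dd k H s s" and "T = Tsum k H"
  have N: "1 \<le> ?N" by (simp add: Suc_le_eq)
  have s: "0 \<le> s" "s \<le> \<rho>" unfolding s_def using \<rho> N div_le_self[of \<rho> ?N] by auto
  have Xb: "0 \<le> X" "X \<le> a" using Xs_bounds[OF s(1), of k H] unfolding X_def a_def by auto
  have Db: "\<bar>D\<bar> \<le> T * a" unfolding D_def T_def a_def using Dd_bound[OF s(1) s(1)] .
  have Xa: "\<bar>X - a\<bar> \<le> s * (T * a)"
  proof -
    have "X - a = (0 - s) * Dd k H s 0" unfolding X_def a_def using Xdiff[OF s(1), of 0 k H] Xs0[of k H] by simp
    then have "\<bar>X - a\<bar> = s * \<bar>Dd k H s 0\<bar>" using s by (simp add: abs_mult)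
    also have "\<dots> \<le> s * (T * a)" unfolding T_def a_def using s by (intro mult_left_mono Dd_bound) auto
    finally show ?thesis .
  qed
  have den: "1 \<le> ?N * (1 + s * X)"
  proof -
    have "1 \<le> 1 + s * X" using s Xb by simp
    have "1 * 1 \<le> ?N * (1 + s * X)" by (rule mult_mono) (use N \<open>1 \<le> 1 + s * X\<close> in auto)
    then show ?thesis by simp
  qed
  have a0: "0 \<le> a" unfolding a_def by (rule aa_nonneg)
  have e: "g1N \<rho> - g1N 0 = ((X - a) - s * D - s * a * X) / (?N * (1 + s * X))"
  proof -
    have nz: "?N * (1 + s * X) \<noteq> 0" using den by auto
    have "g1N \<rho> = (X - s * D) / (?N * (1 + s * X))"
      unfolding g1N_def s_def[symmetric] X_def[symmetric] D_def[symmetric] ..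
    moreover have "g1N 0 = a * (1 + s * X) / (?N * (1 + s * X))"
      unfolding g1N_0 a_def[symmetric] using nz by simp
    ultimately have "g1N \<rho> - g1N 0 = (X - s * D - a * (1 + s * X)) / (?N * (1 + s * X))"
      by (simp add: diff_divide_distrib)
    also have "X - s * D - a * (1 + s * X) = (X - a) - s * D - s * a * X" by (simp add: algebra_simps)
    finally show ?thesis .
  qed
  have num: "\<bar>(X - a) - s * D - s * a * X\<bar> \<le> s * (2 * (T * a) + a\<^sup>2)"
  proof -
    have "\<bar>s * D\<bar> \<le> s * (T * a)" using s Db by (simp add: abs_mult mult_left_mono)
    moreover have "\<bar>s * a * X\<bar> \<le> s * a\<^sup>2"
      using s Xb a0 by (simp add: abs_mult power2_eq_square mult_left_mono mult.assoc)
    moreover have "\<bar>(X - a) - s * D - s * a * X\<bar> \<le> \<bar>X - a\<bar> + \<bar>s * D\<bar> + \<bar>s * a * X\<bar>" by linarith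
    moreover have "s * (2 * (T * a) + a\<^sup>2) = s * (T * a) + s * (T * a) + s * a\<^sup>2" by (simp add: algebra_simps)
    ultimately show ?thesis using Xa by linarith
  qed
  have "\<bar>g1N \<rho> - g1N 0\<bar> = \<bar>(X - a) - s * D - s * a * X\<bar> / (?N * (1 + s * X))"
    unfolding e using den by (simp only: abs_divide abs_of_nonneg[of "?N * (1 + s * X)"])
  also have "\<dots> \<le> \<bar>(X - a) - s * D - s * a * X\<bar>" using den by (rule div_le_self[rotated]) simp
  also have "\<dots> \<le> s * (2 * (T * a) + a\<^sup>2)" by (rule num)
  also have "\<dots> \<le> \<rho> * (2 * (T * a) + a\<^sup>2)"
    using s a0 by (intro mult_right_mono) (auto simp: T_def Tsum_nonneg)
  finally show ?thesis unfolding T_def a_def by (simp add: mult.commute)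
qed


lemma mmse_der2: "(g1N has_real_derivative - (2 * cc k H + (aa k H)\<^sup>2) / (real CARD('t))\<^sup>2) (at 0 within {0..})"
proof -
  let ?N = "real CARD('t)"
  have N: "0 < ?N" by simp
  define T a c where "T = Tsum k H" and "a = aa k H" and "c = cc k H"
  have T0: "0 \<le> T" unfolding T_def by (rule Tsum_nonneg)
  have contD: "((\<lambda>\<rho>. Dd k H (\<rho> / ?N) (\<rho> / ?N)) \<longlongrightarrow> Dd k H (0 / ?N) (0 / ?N)) (at 0 within {0..})"
  proof -
    have "((\<lambda>\<rho>. Dd k H (\<rho> / ?N) (\<rho> / ?N)) \<longlongrightarrow> (\<lambda>\<rho>. Dd k H (\<rho> / ?N) (\<rho> / ?N)) 0) (at 0 within {0..})"
    proof (rule lip_cont0[where C="2 * (T\<^sup>2 * a) / ?N"])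
      fix \<rho> :: real assume r: "0 \<le> \<rho>"
      have "\<bar>Dd k H (\<rho> / ?N) (\<rho> / ?N) - Dd k H 0 0\<bar> \<le> \<bar>\<rho> / ?N - 0\<bar> * (2 * (T\<^sup>2 * a))"
        unfolding T_def a_def by (rule Dd_cont2) (use r N in auto)
      then show "\<bar>Dd k H (\<rho> / ?N) (\<rho> / ?N) - Dd k H (0 / ?N) (0 / ?N)\<bar> \<le> 2 * (T\<^sup>2 * a) / ?N * \<rho>"
        using r N by (simp add: mult.commute)
    qed
    then show ?thesis by simp
  qed
  have contX: "((\<lambda>\<rho>. Xs k H (\<rho> / ?N)) \<longlongrightarrow> Xs k H (0 / ?N)) (at 0 within {0..})"
  proof -
    have "((\<lambda>\<rho>. Xs k H (\<rho> / ?N)) \<longlongrightarrow> (\<lambda>\<rho>. Xs k H (\<rho> / ?N)) 0) (at 0 within {0..})"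
    proof (rule lip_cont0[where C="T * a / ?N"])
      fix \<rho> :: real assume r: "0 \<le> \<rho>"
      have s: "0 \<le> \<rho> / ?N" using r N by simp
      have "Xs k H (\<rho> / ?N) - Xs k H 0 = (0 - \<rho> / ?N) * Dd k H (\<rho> / ?N) 0" by (rule Xdiff) (use s in auto)
      then have "\<bar>Xs k H (\<rho> / ?N) - Xs k H 0\<bar> = \<rho> / ?N * \<bar>Dd k H (\<rho> / ?N) 0\<bar>" using s r by (simp add: abs_mult)
      also have "\<dots> \<le> \<rho> / ?N * (T * a)" unfolding T_def a_def using s by (intro mult_left_mono Dd_bound) auto
      finally show "\<bar>Xs k H (\<rho> / ?N) - Xs k H (0 / ?N)\<bar> \<le> T * a / ?N * \<rho>" by (simp add: mult_ac)
    qed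
    then show ?thesis by simp
  qed
  have Nnz: "?N \<noteq> 0" using N by simp
  have dNum: "((\<lambda>\<rho>. Xs k H (\<rho> / ?N) - \<rho> / ?N * Dd k H (\<rho> / ?N) (\<rho> / ?N)) has_real_derivative
      - Dd k H (0 / ?N) (0 / ?N) * (1 / ?N) - Dd k H (0 / ?N) (0 / ?N) / ?N) (at 0 within {0..})"
    using DERIV_diff[OF Xs_comp_deriv[of 0] mult_cont_deriv0[OF contD Nnz]] N by simp
  have dDen: "((\<lambda>\<rho>. ?N * (1 + \<rho> / ?N * Xs k H (\<rho> / ?N))) has_real_derivative ?N * (0 + Xs k H (0 / ?N) / ?N)) (at 0 within {0..})"
    using DERIV_cmult[OF DERIV_add[OF DERIV_const mult_cont_deriv0[OF contX Nnz]], of ?N] N by simp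
  have nz: "?N * (1 + 0 / ?N * Xs k H (0 / ?N)) \<noteq> 0" using N by simp
  have eqf: "g1N = (\<lambda>\<rho>. (Xs k H (\<rho> / ?N) - \<rho> / ?N * Dd k H (\<rho> / ?N) (\<rho> / ?N)) / (?N * (1 + \<rho> / ?N * Xs k H (\<rho> / ?N))))"
    unfolding g1N_def ..
  have D: "(g1N has_real_derivative
     ((- Dd k H (0 / ?N) (0 / ?N) * (1 / ?N) - Dd k H (0 / ?N) (0 / ?N) / ?N) * (?N * (1 + 0 / ?N * Xs k H (0 / ?N)))
      - (Xs k H (0 / ?N) - 0 / ?N * Dd k H (0 / ?N) (0 / ?N)) * (?N * (0 + Xs k H (0 / ?N) / ?N)))
      / ((?N * (1 + 0 / ?N * Xs k H (0 / ?N))) * (?N * (1 + 0 / ?N * Xs k H (0 / ?N))))) (at 0 within {0..})"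
    unfolding eqf by (rule DERIV_divide[OF dNum dDen nz])
  have v: "((- Dd k H (0 / ?N) (0 / ?N) * (1 / ?N) - Dd k H (0 / ?N) (0 / ?N) / ?N) * (?N * (1 + 0 / ?N * Xs k H (0 / ?N)))
      - (Xs k H (0 / ?N) - 0 / ?N * Dd k H (0 / ?N) (0 / ?N)) * (?N * (0 + Xs k H (0 / ?N) / ?N)))
      / ((?N * (1 + 0 / ?N * Xs k H (0 / ?N))) * (?N * (1 + 0 / ?N * Xs k H (0 / ?N))))
     = - (2 * cc k H + (aa k H)\<^sup>2) / ?N\<^sup>2"
  proof -
    have "Dd k H (0 / ?N) (0 / ?N) = c" "Xs k H (0 / ?N) = a" using Dd00[of k H] Xs0[of k H] unfolding a_def c_def by simp_all
    then show ?thesis unfolding a_def[symmetric] c_def[symmetric] using N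
      by (simp add: field_simps power2_eq_square)
  qed
  show ?thesis using D unfolding v .
qed

end

lemma norm_column_le: "norm (column j (H :: complex^'t::finite^'r::finite)) \<le> norm H"
proof -
  have "sqnorm (column j H) \<le> (\<Sum>j'\<in>UNIV. sqnorm (column j' H))"
    by (rule member_le_sum) (auto simp: sqnorm_norm)
  then have "(norm (column j H))\<^sup>2 \<le> (\<Sum>j'\<in>UNIV. sqnorm (column j' H))" by (simp add: sqnorm_norm)
  then have "(norm (column j H))\<^sup>2 \<le> (norm H)\<^sup>2" by (simp add: sum_sqnorm_cols)
  then show ?thesis by (rule power2_le_imp_le) simp
qed

lemma column_diff: "column j (A - B) = column j A - column j (B :: 'a::ab_group_add^'t^'r)"
  by (simp add: vec_eq_iff column_def)

lemma Kop_diffH: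
  fixes H0 H :: "complex^'t::finite^'r::finite"
  shows "norm (Kop k H0 x - Kop k H x) \<le> real CARD('t) * (norm (H0 - H) * norm x * (2 * norm H0 + norm (H0 - H)))"
proof -
  let ?d = "norm (H0 - H)"
  have trm: "norm (herm (column j H0) x *s column j H0 - herm (column j H) x *s column j H) \<le> ?d * norm x * (2 * norm H0 + ?d)" for j
  proof -
    let ?gz = "column j H0" and ?g = "column j H"
    have e: "herm ?gz x *s ?gz - herm ?g x *s ?g = herm (?gz - ?g) x *s ?gz + herm ?g x *s (?gz - ?g)"
      by (simp add: herm_diff_left vec_eq_iff algebra_simps)
    have dg: "norm (?gz - ?g) \<le> ?d" using norm_column_le[of j "H0 - H"] by (simp add: column_diff)
    have g0: "norm ?gz \<le> norm H0" by (rule norm_column_le)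
    have g: "norm ?g \<le> norm H0 + ?d"
      using norm_column_le[of j H] norm_triangle_ineq4[of H0 "H0 - H"] by (simp add: norm_minus_commute)
    have "norm (herm (?gz - ?g) x *s ?gz + herm ?g x *s (?gz - ?g)) \<le> norm (herm (?gz - ?g) x *s ?gz) + norm (herm ?g x *s (?gz - ?g))"
      by (rule norm_triangle_ineq)
    also have "\<dots> \<le> (?d * norm x) * norm H0 + ((norm H0 + ?d) * norm x) * ?d"
    proof (rule add_mono)
      have "norm (herm (?gz - ?g) x *s ?gz) = cmod (herm (?gz - ?g) x) * norm ?gz" by (rule norm_scale_vec)
      also have "\<dots> \<le> (norm (?gz - ?g) * norm x) * norm ?gz" by (intro mult_right_mono herm_CS) auto
      also have "\<dots> \<le> (?d * norm x) * norm H0" by (intro mult_mono dg g0 mult_right_mono) auto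
      finally show "norm (herm (?gz - ?g) x *s ?gz) \<le> (?d * norm x) * norm H0" .
      have "norm (herm ?g x *s (?gz - ?g)) = cmod (herm ?g x) * norm (?gz - ?g)" by (rule norm_scale_vec)
      also have "\<dots> \<le> (norm ?g * norm x) * norm (?gz - ?g)" by (intro mult_right_mono herm_CS) auto
      also have "\<dots> \<le> ((norm H0 + ?d) * norm x) * ?d" by (intro mult_mono dg g mult_right_mono) auto
      finally show "norm (herm ?g x *s (?gz - ?g)) \<le> ((norm H0 + ?d) * norm x) * ?d" .
    qed
    also have "\<dots> = ?d * norm x * (2 * norm H0 + ?d)" by (simp add: algebra_simps)
    finally show ?thesis unfolding e .
  qed
  have "Kop k H0 x - Kop k H x = (\<Sum>j\<in>UNIV - {k}. herm (column j H0) x *s column j H0 - herm (column j H) x *s column j H)"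
    unfolding Kop_def by (simp add: sum_subtractf)
  then have "norm (Kop k H0 x - Kop k H x) \<le> (\<Sum>j\<in>UNIV - {k}. norm (herm (column j H0) x *s column j H0 - herm (column j H) x *s column j H))"
    by (simp add: norm_sum)
  also have "\<dots> \<le> (\<Sum>j\<in>UNIV - {k}. ?d * norm x * (2 * norm H0 + ?d))" by (intro sum_mono trm)
  also have "\<dots> \<le> (\<Sum>j\<in>(UNIV::'t set). ?d * norm x * (2 * norm H0 + ?d))"
    by (intro sum_mono2) auto
  finally show ?thesis by simp
qed

lemma Mop_diff: "Mop s k H (x - y) = Mop s k H x - Mop s k H y"
  by (simp add: Mop_def Kop_diff vec_eq_iff algebra_simps)

lemma Xs_diffH:
  fixes H0 H :: "complex^'t::finite^'r::finite"
  assumes s: "0 \<le> s"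
  shows "\<bar>Xs k H s - Xs k H0 s\<bar> \<le> norm (H0 - H) * (norm H0 + norm (H0 - H))
     + norm H0 * (norm (H0 - H) + s * (real CARD('t) * (norm (H0 - H) * norm H0 * (2 * norm H0 + norm (H0 - H)))))"
proof -
  let ?d = "norm (H0 - H)"
  let ?u = "uu k H s" and ?uz = "uu k H0 s" and ?h = "hh k H" and ?hz = "hh k H0"
  have hz: "?hz = ?uz + complex_of_real s *s Kop k H0 ?uz"
    unfolding uu_def using Rop_inv(1)[OF s, of k H0 ?hz] by (simp add: Mop_def)
  have "Mop s k H (?u - ?uz) = ?h - (?uz + complex_of_real s *s Kop k H ?uz)"
    unfolding Mop_diff uu_def Rop_inv(1)[OF s] by (simp add: Mop_def)
  also have "\<dots> = (?h - ?hz) + complex_of_real s *s (Kop k H0 ?uz - Kop k H ?uz)"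
    by (subst hz) (simp add: vec_eq_iff algebra_simps)
  finally have ud: "?u - ?uz = Rop s k H ((?h - ?hz) + complex_of_real s *s (Kop k H0 ?uz - Kop k H ?uz))"
    by (metis Rop_inv(2)[OF s])
  have hd: "norm (?h - ?hz) \<le> ?d"
    using norm_column_le[of k "H - H0"] by (simp add: hh_def column_diff norm_minus_commute)
  have uz: "norm ?uz \<le> norm H0" using norm_uu[OF s, of k H0] norm_column_le[of k H0] unfolding hh_def by linarith
  have u: "norm ?u \<le> norm H0 + ?d"
  proof -
    have "norm ?u \<le> norm H" using norm_uu[OF s, of k H] norm_column_le[of k H] unfolding hh_def by linarith
    also have "\<dots> \<le> norm H0 + ?d" using norm_triangle_ineq4[of H0 "H0 - H"] by (simp add: norm_minus_commute)
    finally show ?thesis .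
  qed
  have Kd: "norm (Kop k H0 ?uz - Kop k H ?uz) \<le> real CARD('t) * (?d * norm H0 * (2 * norm H0 + ?d))"
  proof -
    have "norm (Kop k H0 ?uz - Kop k H ?uz) \<le> real CARD('t) * (?d * norm ?uz * (2 * norm H0 + ?d))"
      by (rule Kop_diffH)
    also have "\<dots> \<le> real CARD('t) * (?d * norm H0 * (2 * norm H0 + ?d))"
      by (intro mult_left_mono mult_right_mono uz) auto
    finally show ?thesis .
  qed
  have und: "norm (?u - ?uz) \<le> ?d + s * (real CARD('t) * (?d * norm H0 * (2 * norm H0 + ?d)))"
  proof -
    have "norm (?u - ?uz) \<le> norm ((?h - ?hz) + complex_of_real s *s (Kop k H0 ?uz - Kop k H ?uz))"
      unfolding ud by (rule norm_Rop[OF s])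
    also have "\<dots> \<le> norm (?h - ?hz) + s * norm (Kop k H0 ?uz - Kop k H ?uz)"
    proof -
      have ns: "norm (complex_of_real s *s (Kop k H0 ?uz - Kop k H ?uz)) = s * norm (Kop k H0 ?uz - Kop k H ?uz)"
        using s by (simp only: norm_scale_vec norm_of_real abs_of_nonneg)
      show ?thesis using norm_triangle_ineq[of "?h - ?hz" "complex_of_real s *s (Kop k H0 ?uz - Kop k H ?uz)"]
        unfolding ns .
    qed
    also have "\<dots> \<le> ?d + s * (real CARD('t) * (?d * norm H0 * (2 * norm H0 + ?d)))"
      by (intro add_mono hd mult_left_mono Kd s)
    finally show ?thesis .
  qed
  have e: "Xs k H s - Xs k H0 s = Re (herm (?h - ?hz) ?u) + Re (herm ?hz (?u - ?uz))"
    unfolding Xs_def by (simp add: herm_diff_left herm_diff_right)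
  have b1: "\<bar>Re (herm (?h - ?hz) ?u)\<bar> \<le> ?d * (norm H0 + ?d)"
  proof -
    have "\<bar>Re (herm (?h - ?hz) ?u)\<bar> \<le> norm (?h - ?hz) * norm ?u" using herm_CS abs_Re_le_cmod order_trans by blast
    also have "\<dots> \<le> ?d * (norm H0 + ?d)" by (intro mult_mono hd u) auto
    finally show ?thesis .
  qed
  have b2: "\<bar>Re (herm ?hz (?u - ?uz))\<bar> \<le> norm H0 * (?d + s * (real CARD('t) * (?d * norm H0 * (2 * norm H0 + ?d))))"
  proof -
    have "\<bar>Re (herm ?hz (?u - ?uz))\<bar> \<le> norm ?hz * norm (?u - ?uz)" using herm_CS abs_Re_le_cmod order_trans by blast
    also have "\<dots> \<le> norm H0 * (?d + s * (real CARD('t) * (?d * norm H0 * (2 * norm H0 + ?d))))"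
      by (intro mult_mono und) (auto simp: hh_def norm_column_le)
    finally show ?thesis .
  qed
  show ?thesis unfolding e using b1 b2 by linarith
qed

lemma Xs_contH:
  assumes s: "0 \<le> s"
  shows "continuous_on UNIV (\<lambda>H :: complex^'t::finite^'r::finite. Xs k H s)"
proof (intro continuous_at_imp_continuous_on ballI)
  fix H0 :: "complex^'t^'r"
  define E where "E d = d * (norm H0 + d) + norm H0 * (d + s * (real CARD('t) * (d * norm H0 * (2 * norm H0 + d))))" for d
  have "((\<lambda>H. Xs k H s - Xs k H0 s) \<longlongrightarrow> 0) (at H0)"
  proof (rule Lim_null_comparison)
    show "\<forall>\<^sub>F H in at H0. norm (Xs k H s - Xs k H0 s) \<le> E (norm (H0 - H))"
      unfolding E_def using Xs_diffH[OF s] by (intro always_eventually allI) simp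
    have "((\<lambda>H. E (norm (H0 - H))) \<longlongrightarrow> E (norm (H0 - H0))) (at H0)"
      unfolding E_def by (intro tendsto_intros)
    then show "((\<lambda>H. E (norm (H0 - H))) \<longlongrightarrow> 0) (at H0)" by (simp add: E_def)
  qed
  then have "((\<lambda>H. Xs k H s) \<longlongrightarrow> Xs k H0 s) (at H0)" by (rule LIM_zero_cancel)
  then show "isCont (\<lambda>H. Xs k H s) H0" unfolding isCont_def .
qed

lemma X_MMSE_meas[measurable]:
  fixes k :: "'t::finite"
  assumes "0 \<le> \<rho>"
  shows "(X_MMSE k \<rho> :: complex^'t^'r::finite \<Rightarrow> real) \<in> borel_measurable borel"
proof -
  have "(X_MMSE k \<rho> :: complex^'t^'r::finite \<Rightarrow> real) = (\<lambda>H. Xs k H (\<rho> / real CARD('t)))"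
    by (simp add: X_MMSE_Xs fun_eq_iff)
  moreover have "0 \<le> \<rho> / real CARD('t)" using assms by simp
  ultimately show ?thesis using borel_measurable_continuous_onI[OF Xs_contH[of "\<rho> / real CARD('t)" k]]
    by simp
qed

lemma g_MMSE_bounds:
  fixes k :: "'t::finite" and H :: "complex^'t^'r::finite"
  assumes r: "r \<in> {0..<1}"
  shows "\<bar>ln (1 + r / real CARD('t) * X_MMSE k r H)\<bar> \<le> aa k H"
proof -
  define N where "N = real CARD('t)"
  have N: "1 \<le> N" unfolding N_def by (simp add: Suc_le_eq)
  have s0: "0 \<le> r / N" using r N by simp
  have s1: "r / N \<le> 1" using r N div_le_self[of r N] by auto
  have X: "0 \<le> X_MMSE k r H" "X_MMSE k r H \<le> aa k H"
    unfolding X_MMSE_Xs N_def[symmetric] using Xs_bounds[OF s0, of k H] by auto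
  have y0: "0 \<le> r / N * X_MMSE k r H" using s0 X by (intro mult_nonneg_nonneg) auto
  have "r / N * X_MMSE k r H \<le> 1 * aa k H"
    using s0 s1 X by (intro mult_mono) auto
  moreover have "0 \<le> ln (1 + r / N * X_MMSE k r H)" using y0 by simp
  moreover have "ln (1 + r / N * X_MMSE k r H) \<le> r / N * X_MMSE k r H" using y0 by (rule ln_add_one_self_le_self)
  ultimately show ?thesis unfolding N_def by simp
qed

theorem MMSE_part:
  fixes k :: "'t::finite"
  defines "Ntr \<equiv> real CARD('t)" and "Nrr \<equiv> real CARD('r::finite)"
  shows "low_snr (rate (X_MMSE k :: real \<Rightarrow> complex^'t^'r \<Rightarrow> real))
            (ln 2 / Nrr) (2 * Ntr * Nrr / (2 * Ntr + Nrr - 1))"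
proof -
  let ?M = "chan_measure :: (complex^'t^'r) measure"
  define B where "B H = (1 + (norm H)\<^sup>2)^3" for H :: "complex^'t^'r"
  have iB: "integrable ?M B" unfolding B_def by (rule int_bound3)
  have iB2: "integrable ?M (\<lambda>H. 2 * B H)" using iB by simp
  have iB3: "integrable ?M (\<lambda>H. 3 * B H)" using iB by simp
  have aB: "aa k H \<le> B H" for H :: "complex^'t^'r"
    using aa_le[of k H] B_bounds(1)[of "(norm H)\<^sup>2"] unfolding B_def by simp
  have TaB: "Tsum k H * aa k H \<le> B H" for H :: "complex^'t^'r"
  proof -
    have "Tsum k H * aa k H \<le> (norm H)\<^sup>2 * (norm H)\<^sup>2"
      using aa_le[of k H] T_le[of k H] aa_nonneg[of k H] Tsum_nonneg[of k H]
      by (meson mult_mono order_trans zero_le_power2)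
    also have "\<dots> = ((norm H)\<^sup>2)\<^sup>2" by (simp add: power2_eq_square)
    also have "\<dots> \<le> B H" using B_bounds(2)[of "(norm H)\<^sup>2"] unfolding B_def by simp
    finally show ?thesis .
  qed
  have a2B: "(aa k H)\<^sup>2 \<le> B H" for H :: "complex^'t^'r"
  proof -
    have "(aa k H)\<^sup>2 \<le> ((norm H)\<^sup>2)\<^sup>2" using aa_le[of k H] aa_nonneg[of k H] by (rule_tac power_mono) auto
    also have "\<dots> \<le> B H" using B_bounds(2)[of "(norm H)\<^sup>2"] unfolding B_def by simp
    finally show ?thesis .
  qed
  have rate_eq: "rate (X_MMSE k :: real \<Rightarrow> complex^'t^'r \<Rightarrow> real) = (\<lambda>\<rho>. Ntr * (\<integral>H. ln (1 + \<rho> / real CARD('t) * X_MMSE k \<rho> H) \<partial>?M))"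
    unfolding rate_def Ntr_def by simp
  show ?thesis unfolding rate_eq Ntr_def Nrr_def
  proof (rule receiver_main[where gd="\<lambda>\<rho> H. g1N k H \<rho>" and Ba="\<lambda>H. 2 * B H" and Bb="\<lambda>H. 3 * B H"])
    fix \<rho> :: real assume r: "\<rho> \<in> {0..<1}"
    show "integrable ?M (\<lambda>H. ln (1 + \<rho> / real CARD('t) * X_MMSE k \<rho> H))"
    proof (rule Bochner_Integration.integrable_bound[OF int_aa[of k]])
      have [measurable]: "(X_MMSE k \<rho> :: complex^'t^'r \<Rightarrow> real) \<in> borel_measurable borel"
        using r by (intro X_MMSE_meas) simp
      show "(\<lambda>H. ln (1 + \<rho> / real CARD('t) * X_MMSE k \<rho> H)) \<in> borel_measurable ?M"
        by (rule meas_chan) measurable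
      show "AE H in ?M. norm (ln (1 + \<rho> / real CARD('t) * X_MMSE k \<rho> H)) \<le> norm (aa k H)"
      proof (rule AE_I2)
        fix H :: "complex^'t^'r"
        have "\<bar>ln (1 + \<rho> / real CARD('t) * X_MMSE k \<rho> H)\<bar> \<le> aa k H" by (rule g_MMSE_bounds[OF r])
        then show "norm (ln (1 + \<rho> / real CARD('t) * X_MMSE k \<rho> H)) \<le> norm (aa k H)"
          using aa_nonneg[of k H] by simp
      qed
    qed
  next
    fix H :: "complex^'t^'r" and \<rho> :: real assume r: "\<rho> \<in> {0..<1}"
    show "((\<lambda>r. ln (1 + r / real CARD('t) * X_MMSE k r H)) has_real_derivative g1N k H \<rho>) (at \<rho> within {0..})"
      using r by (intro mmse_der1) simp
    show "\<bar>g1N k H \<rho>\<bar> \<le> 2 * B H" using g1N_bound[OF r, of k H] aB[of H] TaB[of H] by simp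
    show "\<bar>g1N k H \<rho> - g1N k H 0\<bar> \<le> 3 * B H * \<rho>"
    proof -
      have "\<bar>g1N k H \<rho> - g1N k H 0\<bar> \<le> (2 * (Tsum k H * aa k H) + (aa k H)\<^sup>2) * \<rho>" by (rule g1N_lip[OF r])
      also have "\<dots> \<le> 3 * B H * \<rho>" using r TaB[of H] a2B[of H] by (intro mult_right_mono) auto
      finally show ?thesis .
    qed
  next
    show "integrable ?M (\<lambda>H. 2 * B H)" by (rule iB2)
    show "integrable ?M (\<lambda>H. 3 * B H)" by (rule iB3)
    fix H :: "complex^'t^'r"
    show "g1N k H 0 = aa k H / real CARD('t)" by (rule g1N_0)
    show "((\<lambda>r. g1N k H r) has_real_derivative - (2 * cc k H + (aa k H)\<^sup>2) / (real CARD('t))\<^sup>2) (at 0 within {0..})"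
      using mmse_der2[of k H] by simp
  qed
qed

theorem mainTheorem7:
  fixes k :: "'t::finite"
  defines "Ntr \<equiv> real CARD('t)" and "Nrr \<equiv> real CARD('r::finite)"
  shows "low_snr (rate (X_MRC k :: real \<Rightarrow> complex^'t^'r \<Rightarrow> real))
            (ln 2 / Nrr) (2 * Ntr * Nrr / (2 * Ntr + Nrr - 1))
       \<and> low_snr (rate (X_MMSE k :: real \<Rightarrow> complex^'t^'r \<Rightarrow> real))
            (ln 2 / Nrr) (2 * Ntr * Nrr / (2 * Ntr + Nrr - 1))"
  unfolding Ntr_def Nrr_def using MRC_part[of k] MMSE_part[of k] by blast

end
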